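(* Let $\mathbb{K}$ be an ultrametric field and $\rho\in\mathbb{K}$ with $0<|\rho|<1$. Let $E$ be a metrizable (Hausdorff) topological $\mathbb{K}$-vector space, $U\subseteq E$ open, $x\in U$, and let $(x_n)_{n\in\mathbb{N}}$ and $(y_n)_{n\in\mathbb{N}}$ be sequences in $U$ converging to $x$. Then there exist an injective, monotonically increasing map $m\colon\mathbb{N}\to\mathbb{N}$, $k\mapsto m_k$, and a smooth curve $c\colon\mathbb{K}\to E$ with image in $U$ such that: (a) $c(\rho^k)=x_{m_k}$ for all odd $k\in\mathbb{N}$ and $c(\rho^k)=y_{m_k}$ for all even $k\in\mathbb{N}$; (b) $c(0)=x$; (c) $c|_{\mathbb{K}^\times}$ is locally constant; (d) if $t,s\in\mathbb{K}$ with $|t|=|s|$ then $c(t)=c(s)$; (e) $c(\mathbb{K}^\times)=\{c(\rho^k):k\in\mathbb{N}\}$.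
   Context: An ultrametric field is a field with a non-trivial absolute value satisfying $|x+y|\le\max\{|x|,|y|\}$. $\mathbb{N}=\{1,2,\dots\}$. Smoothness: for open $V$ in a topological $\mathbb{K}$-vector space $X$, $V^{[1]}:=\{(x,v,t)\in V\times X\times\mathbb{K}:x+tv\in V\}$; $g\colon V\to Y$ is $C^1$ if continuous and there is a continuous $g^{[1]}\colon V^{[1]}\to Y$ with $g(x+tv)-g(x)=t\,g^{[1]}(x,v,t)$; recursively $V^{[k+1]}=(V^{[k]})^{[1]}$, $g$ is $C^{k+1}$ if $C^k$ and $g^{[k]}$ is $C^1$, $g^{[k+1]}=(g^{[k]})^{[1]}$; smooth means $C^k$ for all $k$ (product topologies used). *)

theory Defs
  imports "HOL-Analysis.Analysis"
begin

definition ultrametric_abs :: "('k::field \<Rightarrow> real) \<Rightarrow> bool" where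
  "ultrametric_abs av \<longleftrightarrow>
     (\<forall>x. 0 \<le> av x) \<and> (\<forall>x. av x = 0 \<longleftrightarrow> x = 0) \<and>
     (\<forall>x y. av (x * y) = av x * av y) \<and>
     (\<forall>x y. av (x + y) \<le> max (av x) (av y)) \<and>
     (\<exists>x. av x \<noteq> 0 \<and> av x \<noteq> 1)"

definition abs_topology :: "('k::field \<Rightarrow> real) \<Rightarrow> 'k topology" where
  "abs_topology av = topology (\<lambda>S. \<forall>x\<in>S. \<exists>r>0. \<forall>y. av (y - x) < r \<longrightarrow> y \<in> S)"

definition metrizable_tvs ::
  "('k::field \<Rightarrow> real) \<Rightarrow> ('k \<Rightarrow> 'e::ab_group_add \<Rightarrow> 'e) \<Rightarrow> 'e topology \<Rightarrow> bool" where
  "metrizable_tvs av sc TE \<longleftrightarrow>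
     vector_space sc \<and> topspace TE = UNIV \<and>
     continuous_map (prod_topology TE TE) TE (\<lambda>(x, y). x + y) \<and>
     continuous_map (prod_topology (abs_topology av) TE) TE (\<lambda>(t, v). sc t v) \<and>
     Hausdorff_space TE \<and> metrizable_space TE"

text \<open>Points of K^n are lists of length n; max-distance (product topology).\<close>
definition ldist :: "('k::field \<Rightarrow> real) \<Rightarrow> 'k list \<Rightarrow> 'k list \<Rightarrow> real" where
  "ldist av xs ys = Max (set (0 # map2 (\<lambda>x y. av (x - y)) xs ys))"

definition cont_on :: "('k::field \<Rightarrow> real) \<Rightarrow> 'e topology \<Rightarrow> 'k list set \<Rightarrow> ('k list \<Rightarrow> 'e) \<Rightarrow> bool" where
  "cont_on av TE D f \<longleftrightarrow>
     (\<forall>x\<in>D. \<forall>W. openin TE W \<and> f x \<in> W \<longrightarrow>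
        (\<exists>r>0. \<forall>y\<in>D. ldist av x y < r \<longrightarrow> f y \<in> W))"

text \<open>V^[1] = {(x,v,t). x \<in> V, x + t v \<in> V}, encoded as x @ v @ [t].\<close>
definition dom1 :: "'k::field list set \<Rightarrow> 'k list set" where
  "dom1 V = {xs @ vs @ [t] | xs vs t. xs \<in> V \<and> length vs = length xs \<and>
                                  map2 (\<lambda>x v. x + t * v) xs vs \<in> V}"

fun cdom :: "nat \<Rightarrow> 'k::field list set" where
  "cdom 0 = {xs. length xs = 1}"
| "cdom (Suc k) = dom1 (cdom k)"

definition smooth_curve ::
  "('k::field \<Rightarrow> real) \<Rightarrow> ('k \<Rightarrow> 'e::ab_group_add \<Rightarrow> 'e) \<Rightarrow> 'e topology \<Rightarrow> ('k \<Rightarrow> 'e) \<Rightarrow> bool" where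
  "smooth_curve av sc TE c \<longleftrightarrow>
     (\<exists>G :: nat \<Rightarrow> 'k list \<Rightarrow> 'e.
        (\<forall>t. G 0 [t] = c t) \<and>
        (\<forall>k. cont_on av TE (cdom k) (G k)) \<and>
        (\<forall>k xs vs t. xs @ vs @ [t] \<in> cdom (Suc k) \<and> length vs = length xs \<longrightarrow>
            G k (map2 (\<lambda>x v. x + t * v) xs vs) - G k xs = sc t (G (Suc k) (xs @ vs @ [t]))))"

end

theory Submission
  imports Defs
begin

lemma istop_abs: "istopology (\<lambda>S. \<forall>x\<in>S. \<exists>r>0. \<forall>y. (av::'k::field\<Rightarrow>real) (y - x) < r \<longrightarrow> y \<in> S)"
  unfolding istopology_def
proof (intro conjI allI impI)
  fix S T assume S: "\<forall>x\<in>S. \<exists>r>0. \<forall>y. av (y - x) < r \<longrightarrow> y \<in> S"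
    and T: "\<forall>x\<in>T. \<exists>r>0. \<forall>y. av (y - x) < r \<longrightarrow> y \<in> T"
  show "\<forall>x\<in>S \<inter> T. \<exists>r>0. \<forall>y. av (y - x) < r \<longrightarrow> y \<in> S \<inter> T"
  proof
    fix x assume x: "x \<in> S \<inter> T"
    obtain r1 where r1: "r1 > 0" "\<forall>y. av (y - x) < r1 \<longrightarrow> y \<in> S" using S x by auto
    obtain r2 where r2: "r2 > 0" "\<forall>y. av (y - x) < r2 \<longrightarrow> y \<in> T" using T x by auto
    show "\<exists>r>0. \<forall>y. av (y - x) < r \<longrightarrow> y \<in> S \<inter> T"
    proof (intro exI conjI allI impI)
      show "min r1 r2 > 0" using r1 r2 by simp
      fix y assume "av (y - x) < min r1 r2"
      then show "y \<in> S \<inter> T" using r1 r2 by simp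
    qed
  qed
next
  fix K assume K: "\<forall>S\<in>K. \<forall>x\<in>S. \<exists>r>0. \<forall>y. av (y - x) < r \<longrightarrow> y \<in> S"
  show "\<forall>x\<in>\<Union>K. \<exists>r>0. \<forall>y. av (y - x) < r \<longrightarrow> y \<in> \<Union>K"
  proof
    fix x assume "x \<in> \<Union>K"
    then obtain S where S: "S \<in> K" "x \<in> S" by auto
    have "\<forall>x\<in>S. \<exists>r>0. \<forall>y. av (y - x) < r \<longrightarrow> y \<in> S" using K S(1) by (rule bspec)
    then have "\<exists>r>0. \<forall>y. av (y - x) < r \<longrightarrow> y \<in> S" using S(2) by (rule bspec)
    then obtain r where "r > 0" "\<forall>y. av (y - x) < r \<longrightarrow> y \<in> S" by auto
    then show "\<exists>r>0. \<forall>y. av (y - x) < r \<longrightarrow> y \<in> \<Union>K" using S by auto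
  qed
qed

lemma openin_abs_topology:
  "openin (abs_topology (av::'k::field\<Rightarrow>real)) S \<longleftrightarrow> (\<forall>x\<in>S. \<exists>r>0. \<forall>y. av (y - x) < r \<longrightarrow> y \<in> S)"
  unfolding abs_topology_def topology_inverse'[OF istop_abs] ..

lemma topspace_abs_topology[simp]: "topspace (abs_topology (av::'k::field\<Rightarrow>real)) = UNIV"
proof -
  have "openin (abs_topology av) UNIV" unfolding openin_abs_topology by (auto intro: exI[of _ 1])
  then show ?thesis using openin_subset by blast
qed

definition close :: "('k::field \<Rightarrow> real) \<Rightarrow> real \<Rightarrow> 'k list \<Rightarrow> 'k list \<Rightarrow> bool" where
  "close av r a b \<longleftrightarrow> list_all2 (\<lambda>x y. av (y - x) < r) a b"

locale uav =
  fixes av :: "'k::field \<Rightarrow> real"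
  assumes uav: "ultrametric_abs av"
begin

lemma av_nonneg: "0 \<le> av x" using uav unfolding ultrametric_abs_def by blast
lemma av_zero[simp]: "av x = 0 \<longleftrightarrow> x = 0" using uav unfolding ultrametric_abs_def by blast
lemma av_mult: "av (x*y) = av x * av y" using uav unfolding ultrametric_abs_def by blast
lemma av_ultra: "av (x+y) \<le> max (av x) (av y)" using uav unfolding ultrametric_abs_def by blast
lemma av_0[simp]: "av 0 = 0" by simp
lemma av_pos: "x \<noteq> 0 \<Longrightarrow> 0 < av x" using av_nonneg[of x] av_zero[of x] by linarith

lemma av_one[simp]: "av 1 = 1"
proof -
  have "av 1 = av 1 * av 1" using av_mult[of 1 1] by simp
  moreover have "av 1 \<noteq> 0" by simp
  ultimately show ?thesis by (metis mult_cancel_left1)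
qed

lemma av_minus_one: "av (-1) = 1"
proof -
  have "av (-1) * av (-1) = 1" using av_mult[of "-1" "-1"] by simp
  then have "(av (-1) - 1) * (av (-1) + 1) = 0" by (simp add: algebra_simps)
  moreover have "av (-1) + 1 \<noteq> 0" using av_nonneg[of "-1"] by linarith
  ultimately show ?thesis by simp
qed

lemma av_minus[simp]: "av (-x) = av x"
  using av_mult[of "-1" x] av_minus_one by simp

lemma av_diff_sym: "av (x - y) = av (y - x)"
  by (metis av_minus minus_diff_eq)

lemma av_diff: "av (x - y) \<le> max (av x) (av y)"
  using av_ultra[of x "-y"] by simp

lemma av_inverse: "av (inverse x) = inverse (av x)"
proof (cases "x = 0")
  case False
  then have "av x * av (inverse x) = 1" using av_mult[of x "inverse x"] by simp
  then show ?thesis using inverse_unique[of "av x" "av (inverse x)"] by simp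
qed simp

lemma av_divide: "av (x / y) = av x / av y"
  by (simp add: divide_inverse av_mult av_inverse)

lemma av_power: "av (x^n) = av x ^ n"
  by (induction n) (simp_all add: av_mult)

lemma av_add_eq: assumes "av y < av x" shows "av (x + y) = av x"
proof -
  have "av (x + y) \<le> av x" using av_ultra[of x y] assms by simp
  moreover have "av x \<le> max (av (x+y)) (av y)" using av_ultra[of "x+y" "-y"] by simp
  ultimately show ?thesis using assms by linarith
qed

lemma av_diff_eq: "av y < av x \<Longrightarrow> av (x - y) = av x"
  using av_add_eq[of "-y" x] by simp

lemma av_near: assumes "av (y - x) < av x" shows "av y = av x"
  using av_add_eq[OF assms] by simp

lemma av_le_near: assumes "av (y - x) < r" "av x < r" shows "av y < r"
  using av_ultra[of x "y - x"] assms by simp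

lemma close_nth: "close av r a b \<longleftrightarrow> length a = length b \<and> (\<forall>i<length a. av (b!i - a!i) < r)"
  unfolding close_def list_all2_conv_all_nth by simp

lemma close_mono: "close av r a b \<Longrightarrow> r \<le> r' \<Longrightarrow> close av r' a b"
  unfolding close_def by (erule list_all2_mono) simp

lemma close_refl: "0 < r \<Longrightarrow> close av r a a"
  unfolding close_nth by simp

lemma ldist_close:
  assumes "length a = length b" "ldist av a b < r"
  shows "close av r a b"
  unfolding close_nth
proof (intro conjI allI impI)
  show "length a = length b" by fact
  fix i assume i: "i < length a"
  have "av (a!i - b!i) \<in> set (0 # map2 (\<lambda>x y. av (x - y)) a b)"
    using i assms(1) by (auto simp: set_zip in_set_conv_nth intro!: exI[of _ i])
  then have "av (a!i - b!i) \<le> ldist av a b" unfolding ldist_def by (intro Max_ge) auto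
  then show "av (b!i - a!i) < r" using assms(2) av_diff_sym by fastforce
qed

end

lemma prod_nbhd:
  assumes "continuous_map (prod_topology X Y) Z f" "openin Z W" "f (a,b) \<in> W"
    "a \<in> topspace X" "b \<in> topspace Y"
  shows "\<exists>U V. openin X U \<and> openin Y V \<and> a \<in> U \<and> b \<in> V \<and> (\<forall>x\<in>U. \<forall>y\<in>V. f (x,y) \<in> W)"
proof -
  let ?S = "{z \<in> topspace (prod_topology X Y). f z \<in> W}"
  have o: "openin (prod_topology X Y) ?S"
    by (rule openin_continuous_map_preimage[OF assms(1,2)])
  have "(a,b) \<in> ?S" using assms(3,4,5) by simp
  then obtain U V where "openin X U" "openin Y V" "a \<in> U" "b \<in> V" "U \<times> V \<subseteq> ?S"
    using o[unfolded openin_prod_topology_alt, rule_format] by meson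
  then show ?thesis by (intro exI[of _ U] exI[of _ V]) auto
qed

definition del :: "nat \<Rightarrow> 'a list \<Rightarrow> 'a list" where
  "del l u = take l u @ drop (Suc l) u"

lemma (in uav) close_del: "close av r a b \<Longrightarrow> close av r (del l a) (del l b)"
  unfolding close_def del_def by (intro list_all2_appendI list_all2_takeI list_all2_dropI)

locale tvs = uav av for av :: "'k::field \<Rightarrow> real" +
  fixes sc :: "'k \<Rightarrow> 'e::ab_group_add \<Rightarrow> 'e" and TE :: "'e topology"
  assumes vs: "vector_space sc" and topE: "topspace TE = UNIV"
   and addc: "continuous_map (prod_topology TE TE) TE (\<lambda>(x,y). x + y)"
   and scc: "continuous_map (prod_topology (abs_topology av) TE) TE (\<lambda>(t,v). sc t v)"
begin

sublocale vector_space sc by (rule vs)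

definition contat :: "('k list \<Rightarrow> 'e) \<Rightarrow> 'k list \<Rightarrow> bool" where
  "contat f u0 \<longleftrightarrow> (\<forall>W. openin TE W \<longrightarrow> f u0 \<in> W \<longrightarrow> (\<exists>r>0. \<forall>u. close av r u0 u \<longrightarrow> f u \<in> W))"

definition kcontat :: "('k list \<Rightarrow> 'k) \<Rightarrow> 'k list \<Rightarrow> bool" where
  "kcontat p u0 \<longleftrightarrow> (\<forall>e>0. \<exists>r>0. \<forall>u. close av r u0 u \<longrightarrow> av (p u - p u0) < e)"

lemma contatI:
  assumes "\<And>W. openin TE W \<Longrightarrow> f u0 \<in> W \<Longrightarrow> \<exists>r>0. \<forall>u. close av r u0 u \<longrightarrow> f u \<in> W"
  shows "contat f u0" using assms unfolding contat_def by blast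

lemma contatD:
  assumes "contat f u0" "openin TE W" "f u0 \<in> W"
  obtains r where "r > 0" "\<And>u. close av r u0 u \<Longrightarrow> f u \<in> W"
  using assms unfolding contat_def by blast

lemma kcontatD:
  assumes "kcontat p u0" "e > 0"
  obtains r where "r > 0" "\<And>u. close av r u0 u \<Longrightarrow> av (p u - p u0) < e"
  using assms unfolding kcontat_def by blast

lemma contat_const: "contat (\<lambda>u. e) u0"
  by (rule contatI) (auto intro: exI[of _ 1])

lemma contat_add:
  assumes f: "contat f u0" and g: "contat g u0"
  shows "contat (\<lambda>u. f u + g u) u0"
proof (rule contatI)
  fix W assume W: "openin TE W" "f u0 + g u0 \<in> W"
  obtain U V where UV: "openin TE U" "openin TE V" "f u0 \<in> U" "g u0 \<in> V"
     "\<forall>x\<in>U. \<forall>y\<in>V. (\<lambda>(x,y). x + y) (x,y) \<in> W"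
    using prod_nbhd[OF addc W(1), of "f u0" "g u0"] W(2) topE by auto
  obtain r1 where r1: "r1 > 0" "\<And>u. close av r1 u0 u \<Longrightarrow> f u \<in> U" using contatD[OF f UV(1,3)] by blast
  obtain r2 where r2: "r2 > 0" "\<And>u. close av r2 u0 u \<Longrightarrow> g u \<in> V" using contatD[OF g UV(2,4)] by blast
  show "\<exists>r>0. \<forall>u. close av r u0 u \<longrightarrow> f u + g u \<in> W"
  proof (intro exI[of _ "min r1 r2"] conjI allI impI)
    show "0 < min r1 r2" using r1 r2 by simp
    fix u assume "close av (min r1 r2) u0 u"
    then have "close av r1 u0 u" "close av r2 u0 u" by (auto elim: close_mono)
    then have "f u \<in> U" "g u \<in> V" using r1 r2 by auto
    then show "f u + g u \<in> W" using UV(5) by auto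
  qed
qed

lemma contat_sc:
  assumes p: "kcontat p u0" and f: "contat f u0"
  shows "contat (\<lambda>u. sc (p u) (f u)) u0"
proof (rule contatI)
  fix W assume W: "openin TE W" "sc (p u0) (f u0) \<in> W"
  obtain A V where AV: "openin (abs_topology av) A" "openin TE V" "p u0 \<in> A" "f u0 \<in> V"
     "\<forall>x\<in>A. \<forall>y\<in>V. (\<lambda>(t,v). sc t v) (x,y) \<in> W"
    using prod_nbhd[OF scc W(1), of "p u0" "f u0"] W(2) topE by auto
  obtain d where d: "d > 0" "\<And>y. av (y - p u0) < d \<Longrightarrow> y \<in> A"
    using AV(1,3) unfolding openin_abs_topology by blast
  obtain r1 where r1: "r1 > 0" "\<And>u. close av r1 u0 u \<Longrightarrow> av (p u - p u0) < d"
    using kcontatD[OF p d(1)] by blast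
  obtain r2 where r2: "r2 > 0" "\<And>u. close av r2 u0 u \<Longrightarrow> f u \<in> V" using contatD[OF f AV(2,4)] by blast
  show "\<exists>r>0. \<forall>u. close av r u0 u \<longrightarrow> sc (p u) (f u) \<in> W"
  proof (intro exI[of _ "min r1 r2"] conjI allI impI)
    show "0 < min r1 r2" using r1 r2 by simp
    fix u assume "close av (min r1 r2) u0 u"
    then have "close av r1 u0 u" "close av r2 u0 u" by (auto elim: close_mono)
    then have "p u \<in> A" "f u \<in> V" using r1 r2 d by auto
    then show "sc (p u) (f u) \<in> W" using AV(5) by auto
  qed
qed

lemma kcontat_const: "kcontat (\<lambda>u. a) u0"
  unfolding kcontat_def by (auto intro: exI[of _ 1])

lemma contat_diff:
  assumes f: "contat f u0" and g: "contat g u0"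
  shows "contat (\<lambda>u. f u - g u) u0"
proof -
  have "contat (\<lambda>u. f u + sc (-1) (g u)) u0"
    by (intro contat_add f contat_sc kcontat_const g)
  then show ?thesis by simp
qed

lemma contat_cong:
  assumes "r0 > 0" "\<And>u. close av r0 u0 u \<Longrightarrow> f u = g u" "contat g u0"
  shows "contat f u0"
proof (rule contatI)
  fix W assume W: "openin TE W" "f u0 \<in> W"
  have "f u0 = g u0" using assms(2)[OF close_refl[OF assms(1)]] .
  then obtain r where r: "r > 0" "\<And>u. close av r u0 u \<Longrightarrow> g u \<in> W"
    using contatD[OF assms(3) W(1)] W(2) by metis
  show "\<exists>r>0. \<forall>u. close av r u0 u \<longrightarrow> f u \<in> W"
  proof (intro exI[of _ "min r r0"] conjI allI impI)
    show "0 < min r r0" using r assms(1) by simp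
    fix u assume "close av (min r r0) u0 u"
    then have "close av r u0 u" "close av r0 u0 u" by (auto elim: close_mono)
    then show "f u \<in> W" using r assms(2) by auto
  qed
qed

lemma contat_comp:
  assumes g: "contat g (d u0)"
    and d: "\<And>e. e > 0 \<Longrightarrow> \<exists>r>0. \<forall>u. close av r u0 u \<longrightarrow> close av e (d u0) (d u)"
  shows "contat (\<lambda>u. g (d u)) u0"
proof (rule contatI)
  fix W assume W: "openin TE W" "g (d u0) \<in> W"
  obtain e where e: "e > 0" "\<And>v. close av e (d u0) v \<Longrightarrow> g v \<in> W" using contatD[OF g W] by blast
  obtain r where "r > 0" "\<forall>u. close av r u0 u \<longrightarrow> close av e (d u0) (d u)" using d[OF e(1)] by blast
  then show "\<exists>r>0. \<forall>u. close av r u0 u \<longrightarrow> g (d u) \<in> W" using e(2) by blast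
qed

lemma kcontat_nth: "i < length u0 \<Longrightarrow> kcontat (\<lambda>u. u ! i) u0"
  unfolding kcontat_def
proof (intro allI impI)
  fix e :: real assume "i < length u0" "e > 0"
  then show "\<exists>r>0. \<forall>u. close av r u0 u \<longrightarrow> av (u ! i - u0 ! i) < e"
    by (intro exI[of _ e]) (auto simp: close_nth)
qed

lemma kcontat_add:
  assumes p: "kcontat p u0" and q: "kcontat q u0"
  shows "kcontat (\<lambda>u. p u + q u) u0"
  unfolding kcontat_def
proof (intro allI impI)
  fix e :: real assume e: "e > 0"
  obtain r1 where r1: "r1 > 0" "\<And>u. close av r1 u0 u \<Longrightarrow> av (p u - p u0) < e" using kcontatD[OF p e] by blast
  obtain r2 where r2: "r2 > 0" "\<And>u. close av r2 u0 u \<Longrightarrow> av (q u - q u0) < e" using kcontatD[OF q e] by blast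
  show "\<exists>r>0. \<forall>u. close av r u0 u \<longrightarrow> av (p u + q u - (p u0 + q u0)) < e"
  proof (intro exI[of _ "min r1 r2"] conjI allI impI)
    show "0 < min r1 r2" using r1 r2 by simp
    fix u assume "close av (min r1 r2) u0 u"
    then have "close av r1 u0 u" "close av r2 u0 u" by (auto elim: close_mono)
    then have "av (p u - p u0) < e" "av (q u - q u0) < e" using r1 r2 by auto
    moreover have "av (p u + q u - (p u0 + q u0)) = av ((p u - p u0) + (q u - q u0))"
      by (rule arg_cong[where f=av]) (simp add: algebra_simps)
    ultimately show "av (p u + q u - (p u0 + q u0)) < e"
      using av_ultra[of "p u - p u0" "q u - q u0"] by linarith
  qed
qed

lemma kcontat_mult:
  assumes p: "kcontat p u0" and q: "kcontat q u0"
  shows "kcontat (\<lambda>u. p u * q u) u0"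
  unfolding kcontat_def
proof (intro allI impI)
  fix e :: real assume e: "e > 0"
  define P where "P = av (p u0) + 1"
  define Q where "Q = av (q u0) + 1"
  have P: "P > 0" "av (p u0) < P" using av_nonneg[of "p u0"] by (auto simp: P_def)
  have Q: "Q > 0" "av (q u0) < Q" using av_nonneg[of "q u0"] by (auto simp: Q_def)
  have e1: "e / Q > 0" using e Q by simp
  have e2: "min 1 (e / P) > 0" using e P by simp
  obtain r1 where r1: "r1 > 0" "\<And>u. close av r1 u0 u \<Longrightarrow> av (p u - p u0) < e / Q" using kcontatD[OF p e1] by blast
  obtain r2 where r2: "r2 > 0" "\<And>u. close av r2 u0 u \<Longrightarrow> av (q u - q u0) < min 1 (e / P)" using kcontatD[OF q e2] by blast
  show "\<exists>r>0. \<forall>u. close av r u0 u \<longrightarrow> av (p u * q u - p u0 * q u0) < e"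
  proof (intro exI[of _ "min r1 r2"] conjI allI impI)
    show "0 < min r1 r2" using r1 r2 by simp
    fix u assume "close av (min r1 r2) u0 u"
    then have "close av r1 u0 u" "close av r2 u0 u" by (auto elim: close_mono)
    then have a: "av (p u - p u0) < e / Q" and b: "av (q u - q u0) < min 1 (e / P)" using r1 r2 by auto
    have "av (q u) \<le> max (av (q u0)) (av (q u - q u0))" using av_ultra[of "q u0" "q u - q u0"] by simp
    also have "\<dots> \<le> Q" using b Q av_nonneg[of "q u0"] unfolding Q_def by auto
    finally have qu: "av (q u) \<le> Q" .
    have t1: "av ((p u - p u0) * q u) < e"
    proof -
      have "av ((p u - p u0) * q u) = av (p u - p u0) * av (q u)" by (rule av_mult)
      also have "\<dots> \<le> (e / Q) * Q" using a qu av_nonneg[of "q u"] av_nonneg[of "p u - p u0"]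
        by (intro mult_mono) auto
      also have "\<dots> = e" using Q by simp
      finally have "av ((p u - p u0) * q u) \<le> e" .
      moreover have "av ((p u - p u0) * q u) < e"
      proof (cases "q u = 0")
        case True then show ?thesis using e by simp
      next
        case False
        then have "av (q u) > 0" by (rule av_pos)
        then have "av (p u - p u0) * av (q u) < (e / Q) * av (q u)" using mult_strict_right_mono[OF a] by blast
        also have "\<dots> \<le> (e / Q) * Q" using qu e1 by (intro mult_left_mono) auto
        finally show ?thesis using Q by (simp add: av_mult)
      qed
      then show ?thesis .
    qed
    have t2: "av (p u0 * (q u - q u0)) < e"
    proof -
      have "av (p u0 * (q u - q u0)) = av (p u0) * av (q u - q u0)" by (rule av_mult)
      also have "\<dots> \<le> av (p u0) * (e / P)" using b av_nonneg[of "p u0"] by (intro mult_left_mono) auto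
      also have "\<dots> < P * (e / P)" using P e by (intro mult_strict_right_mono) auto
      also have "\<dots> = e" using P by simp
      finally show ?thesis .
    qed
    have "p u * q u - p u0 * q u0 = (p u - p u0) * q u + p u0 * (q u - q u0)" by (simp add: algebra_simps)
    then show "av (p u * q u - p u0 * q u0) < e"
      using av_ultra[of "(p u - p u0) * q u" "p u0 * (q u - q u0)"] t1 t2 by simp
  qed
qed

lemma kcontat_diff:
  assumes p: "kcontat p u0" and q: "kcontat q u0"
  shows "kcontat (\<lambda>u. p u - q u) u0"
proof -
  have "kcontat (\<lambda>u. p u + (-1) * q u) u0"
    by (intro kcontat_add p kcontat_mult kcontat_const q)
  then show ?thesis by simp
qed

lemma kcontat_inverse:
  assumes p: "kcontat p u0" and nz: "p u0 \<noteq> 0"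
  shows "kcontat (\<lambda>u. inverse (p u)) u0"
  unfolding kcontat_def
proof (intro allI impI)
  fix e :: real assume e: "e > 0"
  define a where "a = av (p u0)"
  have a: "a > 0" using av_pos[OF nz] by (simp add: a_def)
  have e1: "min a (e * a * a) > 0" using a e by simp
  obtain r where r: "r > 0" "\<And>u. close av r u0 u \<Longrightarrow> av (p u - p u0) < min a (e * a * a)"
    using kcontatD[OF p e1] by blast
  show "\<exists>r>0. \<forall>u. close av r u0 u \<longrightarrow> av (inverse (p u) - inverse (p u0)) < e"
  proof (intro exI[of _ r] conjI allI impI)
    show "r > 0" by fact
    fix u assume "close av r u0 u"
    then have d: "av (p u - p u0) < a" "av (p u - p u0) < e * a * a" using r by auto
    then have pa: "av (p u) = a" using av_near[of "p u" "p u0"] by (simp add: a_def)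
    then have nzu: "p u \<noteq> 0" using a by auto
    have "inverse (p u) - inverse (p u0) = (p u0 - p u) / (p u * p u0)"
      using nz nzu by (simp add: field_simps)
    then have "av (inverse (p u) - inverse (p u0)) = av (p u - p u0) / (a * a)"
      by (simp add: av_divide av_mult pa a_def av_diff_sym)
    also have "\<dots> < e" using d(2) a by (simp add: field_simps)
    finally show "av (inverse (p u) - inverse (p u0)) < e" .
  qed
qed

lemma close_map:
  assumes "\<forall>q\<in>set qs. kcontat q u0" "e > 0"
  shows "\<exists>r>0. \<forall>u. close av r u0 u \<longrightarrow> close av e (map (\<lambda>q. q u0) qs) (map (\<lambda>q. q u) qs)"
  using assms(1)
proof (induction qs)
  case Nil
  then show ?case by (auto simp: close_def intro: exI[of _ 1])
next
  case (Cons q qs)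
  obtain r1 where r1: "r1 > 0" "\<And>u. close av r1 u0 u \<Longrightarrow> av (q u - q u0) < e"
    using kcontatD[OF _ assms(2), of q] Cons.prems by auto
  obtain r2 where r2: "r2 > 0" "\<forall>u. close av r2 u0 u \<longrightarrow> close av e (map (\<lambda>q. q u0) qs) (map (\<lambda>q. q u) qs)"
    using Cons by auto
  show ?case
  proof (intro exI[of _ "min r1 r2"] conjI allI impI)
    show "0 < min r1 r2" using r1 r2 by simp
    fix u assume "close av (min r1 r2) u0 u"
    then have "close av r1 u0 u" "close av r2 u0 u" by (auto elim: close_mono)
    then show "close av e (map (\<lambda>q. q u0) (q # qs)) (map (\<lambda>q. q u) (q # qs))"
      using r1 r2 by (auto simp: close_def)
  qed
qed

end

definition diffabs :: "('k::field \<Rightarrow> real) \<Rightarrow> 'k multiset \<Rightarrow> bool" where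
  "diffabs av M \<longleftrightarrow> (\<exists>a\<in>#M. \<exists>b\<in>#M. av a \<noteq> av b)"

definition canon_a :: "('k::field \<Rightarrow> real) \<Rightarrow> 'k multiset \<Rightarrow> 'k" where
  "canon_a av M = (SOME a. a \<in># M \<and> (\<forall>c\<in>#M. av c \<le> av a))"

definition canon_b :: "('k::field \<Rightarrow> real) \<Rightarrow> 'k multiset \<Rightarrow> 'k" where
  "canon_b av M = (SOME b. b \<in># M \<and> av b < av (canon_a av M))"

primrec dd :: "('k::field \<Rightarrow> real) \<Rightarrow> ('k \<Rightarrow> 'e::ab_group_add \<Rightarrow> 'e) \<Rightarrow> ('k \<Rightarrow> 'e) \<Rightarrow> nat \<Rightarrow> 'k multiset \<Rightarrow> 'e" where
  "dd av sc h 0 M = h (SOME a. a \<in># M)"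
| "dd av sc h (Suc n) M = (if diffabs av M then
      sc (inverse (canon_a av M - canon_b av M))
         (dd av sc h n (M - {#canon_b av M#}) - dd av sc h n (M - {#canon_a av M#}))
     else 0)"

lemma canon:
  fixes av :: "'k::field \<Rightarrow> real"
  assumes "diffabs av M"
  shows "canon_a av M \<in># M" "\<forall>c\<in>#M. av c \<le> av (canon_a av M)"
    "canon_b av M \<in># M" "av (canon_b av M) < av (canon_a av M)"
proof -
  obtain a1 b1 where ab1: "a1 \<in># M" "b1 \<in># M" "av a1 \<noteq> av b1" using assms unfolding diffabs_def by blast
  let ?S = "av ` set_mset M"
  have fin: "finite ?S" by simp
  have ne: "?S \<noteq> {}" using ab1 by auto
  have "Max ?S \<in> ?S" using Max_in[OF fin ne] .
  then obtain a where a: "a \<in># M" "av a = Max ?S" by auto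
  have ex: "\<exists>a. a \<in># M \<and> (\<forall>c\<in>#M. av c \<le> av a)"
    using a fin by (intro exI[of _ a]) auto
  have A: "canon_a av M \<in># M \<and> (\<forall>c\<in>#M. av c \<le> av (canon_a av M))"
    unfolding canon_a_def by (rule someI_ex[OF ex])
  then show "canon_a av M \<in># M" "\<forall>c\<in>#M. av c \<le> av (canon_a av M)" by auto
  have "av a1 \<le> av (canon_a av M)" "av b1 \<le> av (canon_a av M)" using A ab1 by auto
  then have exb: "\<exists>b. b \<in># M \<and> av b < av (canon_a av M)"
    using ab1 by (cases "av a1 = av (canon_a av M)") (auto intro: exI[of _ a1] exI[of _ b1])
  have "canon_b av M \<in># M \<and> av (canon_b av M) < av (canon_a av M)"
    unfolding canon_b_def by (rule someI_ex[OF exb])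
  then show "canon_b av M \<in># M" "av (canon_b av M) < av (canon_a av M)" by auto
qed

lemma in_diff_single: "x \<in># M \<Longrightarrow> x \<noteq> y \<Longrightarrow> x \<in># M - {#y#}"
  by (simp add: in_diff_count)

lemma some_in: "M \<noteq> {#} \<Longrightarrow> (SOME x. x \<in># M) \<in># M"
  by (rule someI_ex) auto

lemma size2: assumes "size M = 2" "a \<in># M" "b \<in># M" "a \<noteq> b" shows "M = {#a, b#}"
proof -
  have M: "M = add_mset a (M - {#a#})" using assms(2) by simp
  have b: "b \<in># M - {#a#}" using in_diff_single[OF assms(3)] assms(4) by auto
  obtain X where X: "M - {#a#} = add_mset b X" using multi_member_split[OF b] by blast
  have "size (M - {#a#}) = 1" using size_Diff_singleton[OF assms(2)] assms(1) by simp
  then have "size X = 0" using X by simp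
  then have "X = {#}" by simp
  then show ?thesis using M X by simp
qed

lemma group_aux:
  fixes A1 A2 B1 B2 C1 C2 Gbe Gae Gab Z :: "'e::ab_group_add"
  assumes "A1 = A2 + (Gbe - Gae)" "B1 = B2 + (Gab - Gae)" "C1 = C2 + (Gab - Gbe)"
  shows "(A1 - A2) + (C1 - B1) = (Z - B2) + (C2 - Z)"
  unfolding assms by (simp add: algebra_simps)

locale ddloc = tvs av sc TE for av :: "'k::field \<Rightarrow> real" and sc :: "'k \<Rightarrow> 'e::ab_group_add \<Rightarrow> 'e" and TE +
  fixes h :: "'k \<Rightarrow> 'e"
  assumes hsph: "\<And>a b. av a = av b \<Longrightarrow> h a = h b"
begin

abbreviation D where "D \<equiv> dd av sc h"

lemma sc_cancel: "k \<noteq> 0 \<Longrightarrow> sc k x = sc k y \<Longrightarrow> x = y"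
  by (metis scale_one scale_scale field_class.field_inverse mult.commute)

lemma dd_canon:
  assumes "diffabs av M"
  shows "sc (canon_a av M - canon_b av M) (D (Suc n) M)
       = D n (M - {#canon_b av M#}) - D n (M - {#canon_a av M#})"
proof -
  have "canon_a av M \<noteq> canon_b av M" using canon(4)[OF assms] by auto
  then show ?thesis using assms by simp
qed

lemma not_diffabs_sub: "\<not> diffabs av M \<Longrightarrow> \<not> diffabs av (M - N)"
  unfolding diffabs_def by (meson in_diffD)

lemma dd_pair:
  "size M = n + 2 \<Longrightarrow> a \<in># M \<Longrightarrow> b \<in># M \<Longrightarrow>
   sc (a - b) (D (Suc n) M) = D n (M - {#b#}) - D n (M - {#a#})"
proof (induction n arbitrary: M a b)
  case (0 M a b)
  show ?case
  proof (cases "diffabs av M")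
    case False
    have "size (M - {#b#}) = 1" using size_Diff_singleton[OF "0.prems"(3)] "0.prems"(1) by simp
    moreover have "size (M - {#a#}) = 1" using size_Diff_singleton[OF "0.prems"(2)] "0.prems"(1) by simp
    ultimately have ne1: "M - {#b#} \<noteq> {#}" "M - {#a#} \<noteq> {#}" by auto
    have i1: "(SOME x. x \<in># M - {#b#}) \<in># M" using some_in[OF ne1(1)] by (rule in_diffD)
    have i2: "(SOME x. x \<in># M - {#a#}) \<in># M" using some_in[OF ne1(2)] by (rule in_diffD)
    have "D 0 (M - {#b#}) = D 0 (M - {#a#})"
      using False i1 i2 unfolding diffabs_def by (auto intro!: hsph)
    then show ?thesis using False by simp
  next
    case True
    let ?a = "canon_a av M" and ?b = "canon_b av M"
    have c: "?a \<in># M" "?b \<in># M" "av ?b < av ?a" using canon[OF True] by auto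
    have ab: "?a \<noteq> ?b" using c by auto
    have M: "M = {#?a, ?b#}" using size2[OF _ c(1,2) ab] "0.prems" by simp
    have E: "sc (?a - ?b) (D (Suc 0) M) = D 0 (M - {#?b#}) - D 0 (M - {#?a#})" by (rule dd_canon[OF True])
    show ?thesis
    proof (cases "a = b")
      case True then show ?thesis by simp
    next
      case False
      have "a \<in># {#?a, ?b#}" "b \<in># {#?a, ?b#}" using "0.prems" M by auto
      then have "(a = ?a \<and> b = ?b) \<or> (a = ?b \<and> b = ?a)" using False by auto
      then show ?thesis
      proof
        assume "a = ?a \<and> b = ?b" then show ?thesis using E by simp
      next
        assume ab2: "a = ?b \<and> b = ?a"
        have "sc (a - b) (D (Suc 0) M) = - sc (?a - ?b) (D (Suc 0) M)"
          using ab2 by (simp add: scale_left_diff_distrib)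
        then show ?thesis using E ab2 by simp
      qed
    qed
  qed
next
  case (Suc n M a b)
  show ?case
  proof (cases "diffabs av M")
    case False
    have "\<not> diffabs av (M - {#b#})" "\<not> diffabs av (M - {#a#})" by (rule not_diffabs_sub[OF False])+
    then show ?thesis using False by simp
  next
    case True
    let ?a = "canon_a av M" and ?b = "canon_b av M"
    have c: "?a \<in># M" "?b \<in># M" "av ?b < av ?a" using canon[OF True] by auto
    have ab: "?a - ?b \<noteq> 0" using c by auto
    define T where "T = D (Suc (Suc n)) M"
    define F where "F e = D (Suc n) (M - {#e#})" for e
    have E: "sc (?a - ?b) T = F ?b - F ?a" unfolding T_def F_def by (rule dd_canon[OF True])
    have C: "F e + sc e T = F ?a + sc ?a T" if e: "e \<in># M" for e
    proof (cases "e = ?a")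
      case True then show ?thesis by simp
    next
      case ea: False
      show ?thesis
      proof (cases "e = ?b")
        case True
        then show ?thesis using E by (simp add: scale_left_diff_distrib algebra_simps)
      next
        case eb: False
        have sM: "size (M - {#e#}) = n + 2" "size (M - {#?a#}) = n + 2" "size (M - {#?b#}) = n + 2"
          using Suc.prems(1) e c by (auto simp: size_Diff_singleton)
        have ab': "?a \<noteq> ?b" using c by auto
        have m1: "?a \<in># M - {#e#}" "?b \<in># M - {#e#}"
          using in_diff_single[OF c(1), of e] in_diff_single[OF c(2), of e] ea eb by auto
        have m2: "e \<in># M - {#?a#}" "?b \<in># M - {#?a#}"
          using in_diff_single[OF e, of ?a] in_diff_single[OF c(2), of ?a] ea ab' by auto
        have m3: "e \<in># M - {#?b#}" "?a \<in># M - {#?b#}"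
          using in_diff_single[OF e, of ?b] in_diff_single[OF c(1), of ?b] eb ab' by auto
        have I1: "sc (?a - ?b) (F e) = D n (M - {#e#} - {#?b#}) - D n (M - {#e#} - {#?a#})"
          unfolding F_def by (rule Suc.IH[OF sM(1) m1])
        have I2: "sc (e - ?b) (F ?a) = D n (M - {#?a#} - {#?b#}) - D n (M - {#?a#} - {#e#})"
          unfolding F_def by (rule Suc.IH[OF sM(2) m2])
        have I3: "sc (e - ?a) (F ?b) = D n (M - {#?b#} - {#?a#}) - D n (M - {#?b#} - {#e#})"
          unfolding F_def by (rule Suc.IH[OF sM(3) m3])
        define Gbe where "Gbe = D n (M - {#?b#} - {#e#})"
        define Gae where "Gae = D n (M - {#?a#} - {#e#})"
        define Gab where "Gab = D n (M - {#?a#} - {#?b#})"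
        have I1': "sc ?a (F e) = sc ?b (F e) + (Gbe - Gae)"
          using I1 unfolding Gbe_def Gae_def
          by (simp add: scale_left_diff_distrib diff_right_commute eq_diff_eq algebra_simps)
        have I2': "sc e (F ?a) = sc ?b (F ?a) + (Gab - Gae)"
          using I2 unfolding Gab_def Gae_def
          by (simp add: scale_left_diff_distrib eq_diff_eq algebra_simps)
        have I3': "sc e (F ?b) = sc ?a (F ?b) + (Gab - Gbe)"
          using I3 unfolding Gab_def Gbe_def
          by (simp add: scale_left_diff_distrib diff_right_commute eq_diff_eq algebra_simps)
        have key: "(sc ?a (F e) - sc ?b (F e)) + (sc e (F ?b) - sc e (F ?a))
             = (sc ?a (F ?a) - sc ?b (F ?a)) + (sc ?a (F ?b) - sc ?a (F ?a))"
          by (rule group_aux[OF I1' I2' I3'])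
        have L1: "sc (?a - ?b) (F e + sc e T) = sc (?a - ?b) (F e) + sc e (F ?b - F ?a)"
        proof -
          have "sc (?a - ?b) (F e + sc e T) = sc (?a - ?b) (F e) + sc (?a - ?b) (sc e T)"
            by (rule scale_right_distrib)
          also have "sc (?a - ?b) (sc e T) = sc e (sc (?a - ?b) T)" by (rule scale_left_commute)
          also have "\<dots> = sc e (F ?b - F ?a)" by (simp only: E)
          finally show ?thesis .
        qed
        have L: "sc (?a - ?b) (F e + sc e T) = (sc ?a (F e) - sc ?b (F e)) + (sc e (F ?b) - sc e (F ?a))"
          unfolding L1 by (simp only: scale_left_diff_distrib scale_right_diff_distrib)
        have R1: "sc (?a - ?b) (F ?a + sc ?a T) = sc (?a - ?b) (F ?a) + sc ?a (F ?b - F ?a)"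
        proof -
          have "sc (?a - ?b) (F ?a + sc ?a T) = sc (?a - ?b) (F ?a) + sc (?a - ?b) (sc ?a T)"
            by (rule scale_right_distrib)
          also have "sc (?a - ?b) (sc ?a T) = sc ?a (sc (?a - ?b) T)" by (rule scale_left_commute)
          also have "\<dots> = sc ?a (F ?b - F ?a)" by (simp only: E)
          finally show ?thesis .
        qed
        have R: "sc (?a - ?b) (F ?a + sc ?a T) = (sc ?a (F ?a) - sc ?b (F ?a)) + (sc ?a (F ?b) - sc ?a (F ?a))"
          unfolding R1 by (simp only: scale_left_diff_distrib scale_right_diff_distrib)
        show ?thesis using sc_cancel[OF ab] L R key by metis
      qed
    qed
    have "sc (a - b) T = (F ?a + sc ?a T - F a) - (F ?a + sc ?a T - F b)"
      using C[OF Suc.prems(2)] C[OF Suc.prems(3)] by (simp add: scale_left_diff_distrib algebra_simps)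
    then have "sc (a - b) T = F b - F a" by simp
    then show ?thesis unfolding T_def F_def .
  qed
qed

end

lemma mset_del: "i < length u \<Longrightarrow> mset u - {#u!i#} = mset (del i u)"
proof -
  assume i: "i < length u"
  have "u = take i u @ u!i # drop (Suc i) u" using i by (simp add: id_take_nth_drop)
  then have "mset u = add_mset (u!i) (mset (take i u @ drop (Suc i) u))"
    by (metis mset.simps(2) mset_append union_mset_add_mset_right)
  then show ?thesis unfolding del_def by simp
qed

lemma length_del: "i < length u \<Longrightarrow> length (del i u) = length u - 1"
  unfolding del_def by simp

locale ddloc2 = ddloc av sc TE h for av :: "'k::field \<Rightarrow> real" and sc :: "'k \<Rightarrow> 'e::ab_group_add \<Rightarrow> 'e" and TE h +
  assumes h0: "h 0 = 0"
    and decay: "\<And>j W. openin TE W \<Longrightarrow> 0 \<in> W \<Longrightarrow>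
       \<exists>\<epsilon>>0. \<forall>w c. av w < \<epsilon> \<longrightarrow> av c * av w ^ j \<le> 1 \<longrightarrow> sc c (h w) \<in> W"
begin

definition Dfun :: "'k list \<Rightarrow> 'e" where
  "Dfun u = D (length u - 1) (mset u)"

lemma Dfun_single[simp]: "Dfun [a] = h a"
  unfolding Dfun_def by simp

lemma Dfun_swap:
  "Dfun (P @ [y] @ Q) - Dfun (P @ [x] @ Q) = sc (y - x) (Dfun (P @ [x, y] @ Q))"
proof -
  define n where "n = length P + length Q"
  define M where "M = mset (P @ [x, y] @ Q)"
  have s: "size M = n + 2" unfolding M_def n_def by simp
  have "sc (y - x) (D (Suc n) M) = D n (M - {#x#}) - D n (M - {#y#})"
    by (rule dd_pair[OF s]) (auto simp: M_def)
  moreover have "M - {#x#} = mset (P @ [y] @ Q)" "M - {#y#} = mset (P @ [x] @ Q)"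
    unfolding M_def by simp_all
  ultimately show ?thesis unfolding Dfun_def M_def n_def by simp
qed

lemma Dfun_pair:
  assumes "i < length u" "l < length u" "length u = n + 2"
  shows "sc (u!i - u!l) (Dfun u) = Dfun (del l u) - Dfun (del i u)"
proof -
  have "sc (u!i - u!l) (D (Suc n) (mset u)) = D n (mset u - {#u!l#}) - D n (mset u - {#u!i#})"
    by (rule dd_pair) (use assms in auto)
  then show ?thesis unfolding Dfun_def using assms by (simp add: mset_del length_del)
qed

lemma sum_list_sc: "sc k (sum_list (map f L)) = sum_list (map (\<lambda>x. sc k (f x)) L)"
  by (induction L) (simp_all add: scale_right_distrib)

lemma dd_rep:
  "size M = n + 1 \<Longrightarrow> \<exists>L. length L \<le> 2 ^ n \<and> (\<forall>p\<in>set L. snd p \<in># M \<and> av (fst p) * av (snd p) ^ n \<le> 1)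
     \<and> D n M = sum_list (map (\<lambda>p. sc (fst p) (h (snd p))) L)"
proof (induction n arbitrary: M)
  case 0
  then have ne: "M \<noteq> {#}" by auto
  show ?case
    by (intro exI[of _ "[(1, SOME a. a \<in># M)]"]) (simp add: some_in[OF ne])
next
  case (Suc n M)
  show ?case
  proof (cases "diffabs av M")
    case False
    then show ?thesis by (intro exI[of _ "[]"]) simp
  next
    case True
    let ?a = "canon_a av M" and ?b = "canon_b av M"
    have c: "?a \<in># M" "\<forall>c\<in>#M. av c \<le> av ?a" "?b \<in># M" "av ?b < av ?a" using canon[OF True] by auto
    have sa: "size (M - {#?a#}) = n + 1" "size (M - {#?b#}) = n + 1"
      using Suc.prems c by (auto simp: size_Diff_singleton)
    obtain L1 where L1: "length L1 \<le> 2 ^ n" "\<forall>p\<in>set L1. snd p \<in># M - {#?b#} \<and> av (fst p) * av (snd p) ^ n \<le> 1"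
      "D n (M - {#?b#}) = sum_list (map (\<lambda>p. sc (fst p) (h (snd p))) L1)"
      using Suc.IH[OF sa(2)] by blast
    obtain L2 where L2: "length L2 \<le> 2 ^ n" "\<forall>p\<in>set L2. snd p \<in># M - {#?a#} \<and> av (fst p) * av (snd p) ^ n \<le> 1"
      "D n (M - {#?a#}) = sum_list (map (\<lambda>p. sc (fst p) (h (snd p))) L2)"
      using Suc.IH[OF sa(1)] by blast
    define k where "k = inverse (?a - ?b)"
    have avk: "av k = inverse (av ?a)" unfolding k_def using av_diff_eq[OF c(4)] by (simp add: av_inverse)
    have apos: "av ?a > 0" using c(4) av_nonneg[of ?b] by linarith
    define L where "L = map (\<lambda>p. (k * fst p, snd p)) L1 @ map (\<lambda>p. (- k * fst p, snd p)) L2"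
    have bound: "av (k' * c) * av w ^ Suc n \<le> 1" if "av k' = av k" "w \<in># M" "av c * av w ^ n \<le> 1" for k' c w
    proof -
      have w: "av w \<le> av ?a" using c(2) that(2) by auto
      have "av (k' * c) * av w ^ Suc n = (av c * av w ^ n) * (av w / av ?a)"
        using that(1) by (simp add: av_mult avk field_simps)
      also have "\<dots> \<le> 1 * 1"
        using that(3) w apos av_nonneg[of w] av_nonneg[of c]
        by (intro mult_mono) (auto simp: field_simps)
      finally show ?thesis by simp
    qed
    show ?thesis
    proof (intro exI[of _ L] conjI)
      show "length L \<le> 2 ^ Suc n" using L1(1) L2(1) by (simp add: L_def)
      show "\<forall>p\<in>set L. snd p \<in># M \<and> av (fst p) * av (snd p) ^ Suc n \<le> 1"
      proof
        fix p assume "p \<in> set L"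
        then consider (a) q where "q \<in> set L1" "p = (k * fst q, snd q)"
          | (b) q where "q \<in> set L2" "p = (- k * fst q, snd q)" unfolding L_def by auto
        then show "snd p \<in># M \<and> av (fst p) * av (snd p) ^ Suc n \<le> 1"
        proof cases
          case a
          then have "snd q \<in># M" using L1(2) by (auto dest: in_diffD)
          then show ?thesis using a bound[of k "snd q" "fst q"] L1(2) by auto
        next
          case b
          then have "snd q \<in># M" using L2(2) by (auto dest: in_diffD)
          then show ?thesis using b bound[of "-k" "snd q" "fst q"] L2(2) by auto
        qed
      qed
      show "D (Suc n) M = sum_list (map (\<lambda>p. sc (fst p) (h (snd p))) L)"
      proof -
        have "D (Suc n) M = sc k (D n (M - {#?b#}) - D n (M - {#?a#}))"
          using True by (simp add: k_def)
        also have "\<dots> = sc k (D n (M - {#?b#})) + sc (-k) (D n (M - {#?a#}))"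
          by (simp add: scale_right_diff_distrib)
        also have "\<dots> = sum_list (map (\<lambda>p. sc (fst p) (h (snd p))) L)"
          unfolding L1(3) L2(3) sum_list_sc L_def by (simp add: comp_def)
        finally show ?thesis .
      qed
    qed
  qed
qed

lemma sum_small:
  assumes "openin TE W" "0 \<in> W"
  shows "\<exists>V. openin TE V \<and> 0 \<in> V \<and> (\<forall>L. length L \<le> N \<longrightarrow> set L \<subseteq> V \<longrightarrow> sum_list L \<in> W)"
  using assms
proof (induction N arbitrary: W)
  case 0
  then show ?case by (intro exI[of _ W]) auto
next
  case (Suc N W)
  obtain V1 V2 where V: "openin TE V1" "openin TE V2" "0 \<in> V1" "0 \<in> V2"
     "\<forall>x\<in>V1. \<forall>y\<in>V2. (\<lambda>(x,y). x + y) (x,y) \<in> W"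
    using prod_nbhd[OF addc Suc.prems(1), of 0 0] Suc.prems(2) topE by auto
  obtain V' where V': "openin TE V'" "0 \<in> V'" "\<forall>L. length L \<le> N \<longrightarrow> set L \<subseteq> V' \<longrightarrow> sum_list L \<in> V2"
    using Suc.IH[OF V(2,4)] by blast
  show ?case
  proof (intro exI[of _ "V1 \<inter> V'"] conjI allI impI)
    show "openin TE (V1 \<inter> V')" using V(1) V'(1) by auto
    show "0 \<in> V1 \<inter> V'" using V V' by auto
    fix L :: "'e list" assume L: "length L \<le> Suc N" "set L \<subseteq> V1 \<inter> V'"
    show "sum_list L \<in> W"
    proof (cases L)
      case Nil
      then show ?thesis using Suc.prems by simp
    next
      case (Cons x L')
      then have "x \<in> V1" "sum_list L' \<in> V2" using L V'(3) by auto
      then show ?thesis using V(5) Cons by auto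
    qed
  qed
qed

lemma h_cont: "contat (\<lambda>u. h (u!0)) [a]"
proof (cases "a = 0")
  case False
  show ?thesis
  proof (rule contat_cong[OF av_pos[OF False]])
    fix u assume "close av (av a) [a] u"
    then have "\<forall>i<length [a]. av (u!i - [a]!i) < av a" unfolding close_nth by blast
    then have "0 < length [a] \<longrightarrow> av (u!0 - [a]!0) < av a" by (rule spec)
    then have "av (u!0 - a) < av a" by simp
    then show "h (u!0) = h a" by (intro hsph) (rule av_near)
  next
    show "contat (\<lambda>u. h a) [a]" by (rule contat_const)
  qed
next
  case True
  show ?thesis
  proof (rule contatI)
    fix W assume W: "openin TE W" "h ([a]!0) \<in> W"
    have W0: "0 \<in> W" using W(2) True h0 by simp
    have "\<exists>\<epsilon>>0. \<forall>w c. av w < \<epsilon> \<longrightarrow> av c * av w ^ 0 \<le> 1 \<longrightarrow> sc c (h w) \<in> W"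
      by (rule decay[OF W(1) W0])
    then obtain e where e: "e > 0" "\<forall>w c. av w < e \<longrightarrow> av c * av w ^ 0 \<le> 1 \<longrightarrow> sc c (h w) \<in> W"
      by (elim exE conjE) (rule that)
    show "\<exists>r>0. \<forall>u. close av r [a] u \<longrightarrow> h (u!0) \<in> W"
    proof (intro exI[of _ e] conjI allI impI)
      show "e > 0" by fact
      fix u assume "close av e [a] u"
      then have "\<forall>i<length [a]. av (u!i - [a]!i) < e" unfolding close_nth by blast
      then have "0 < length [a] \<longrightarrow> av (u!0 - [a]!0) < e" by (rule spec)
      then have "av (u!0) < e" using True by simp
      then have "sc 1 (h (u!0)) \<in> W" using e(2)[rule_format, of "u!0" 1] by simp
      then show "h (u!0) \<in> W" by simp
    qed
  qed
qed

end

context ddloc2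
begin

lemma close_len: "close av r a b \<Longrightarrow> length b = length a"
  unfolding close_nth by simp

lemma close_at: "close av r a b \<Longrightarrow> k < length a \<Longrightarrow> av (b!k - a!k) < r"
  unfolding close_nth by blast

lemma contat_Dfun_nil: "contat Dfun []"
proof (rule contat_cong[OF zero_less_one])
  fix u assume "close av 1 [] u"
  then have "u = []" using close_len by fastforce
  then show "Dfun u = Dfun []" by simp
next
  show "contat (\<lambda>u. Dfun []) []" by (rule contat_const)
qed

lemma contat_Dfun: "length u0 = n + 1 \<Longrightarrow> contat Dfun u0"
proof (induction n arbitrary: u0)
  case 0
  then obtain a where u0: "u0 = [a]" by (cases u0) auto
  show ?case unfolding u0
  proof (rule contat_cong[OF zero_less_one])
    fix u assume "close av 1 [a] u"
    then have "length u = 1" using close_len by fastforce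
    then have "u = [u!0]" by (cases u) auto
    then show "Dfun u = h (u!0)" by (metis Dfun_single)
  next
    show "contat (\<lambda>u. h (u!0)) [a]" by (rule h_cont)
  qed
next
  case (Suc n u0)
  show ?case
  proof (cases "\<exists>i<length u0. \<exists>l<length u0. av (u0!l) < av (u0!i)")
    case True
    then obtain i l where il: "i < length u0" "l < length u0" "av (u0!l) < av (u0!i)" by blast
    define r0 where "r0 = av (u0!i)"
    have r0: "r0 > 0" using il(3) av_nonneg[of "u0!l"] unfolding r0_def by linarith
    define g where "g u = sc (inverse (u!i - u!l)) (Dfun (del l u) - Dfun (del i u))" for u
    have eq: "Dfun u = g u" if cu: "close av r0 u0 u" for u
    proof -
      have len: "length u = length u0" using close_len[OF cu] .
      have a1: "av (u!i) = av (u0!i)"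
        using close_at[OF cu il(1)] unfolding r0_def by (rule av_near)
      have a2: "av (u!l) < r0"
        using av_le_near[OF close_at[OF cu il(2)]] il(3) unfolding r0_def by blast
      have ne: "u!i - u!l \<noteq> 0" using a1 a2 unfolding r0_def by auto
      have "sc (u!i - u!l) (Dfun u) = Dfun (del l u) - Dfun (del i u)"
        by (rule Dfun_pair) (use len il Suc.prems in auto)
      then have "sc (inverse (u!i - u!l)) (sc (u!i - u!l) (Dfun u)) = g u" unfolding g_def by simp
      then show ?thesis using ne by simp
    qed
    have ne0: "u0!i - u0!l \<noteq> 0" using il(3) by auto
    have lenl: "length (del l u0) = n + 1" "length (del i u0) = n + 1"
      using il Suc.prems by (auto simp: length_del)
    have cl: "contat (\<lambda>u. Dfun (del l u)) u0"
      by (rule contat_comp[where g=Dfun and d="del l", OF Suc.IH[OF lenl(1)]]) (auto intro: close_del)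
    have ci: "contat (\<lambda>u. Dfun (del i u)) u0"
      by (rule contat_comp[where g=Dfun and d="del i", OF Suc.IH[OF lenl(2)]]) (auto intro: close_del)
    have kc: "kcontat (\<lambda>u. inverse (u!i - u!l)) u0"
      by (rule kcontat_inverse[OF kcontat_diff[OF kcontat_nth[OF il(1)] kcontat_nth[OF il(2)]] ne0])
    have cg: "contat g u0" unfolding g_def by (rule contat_sc[OF kc contat_diff[OF cl ci]])
    show ?thesis
    proof (rule contat_cong[where f=Dfun and g=g])
      show "r0 > 0" by (rule r0)
      fix u assume "close av r0 u0 u"
      then show "Dfun u = g u" by (rule eq)
    next
      show "contat g u0" by (rule cg)
    qed
  next
    case False
    have alleq: "\<forall>k<length u0. av (u0!k) = av (u0!0)"
    proof (intro allI impI)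
      fix k assume k: "k < length u0"
      have z0: "0 < length u0" using Suc.prems by simp
      show "av (u0!k) = av (u0!0)"
      proof (rule ccontr)
        assume "av (u0!k) \<noteq> av (u0!0)"
        then have "av (u0!k) < av (u0!0) \<or> av (u0!0) < av (u0!k)" by linarith
        then show False using False k z0 by blast
      qed
    qed
    have nd: "\<not> diffabs av (mset u0)"
      unfolding diffabs_def using alleq by (auto simp: in_set_conv_nth)
    have D0: "Dfun u0 = 0" unfolding Dfun_def using nd Suc.prems by simp
    show ?thesis
    proof (cases "u0!0 = 0")
      case False
      define r0 where "r0 = av (u0!0)"
      have r0: "r0 > 0" using av_pos[OF False] unfolding r0_def .
      have eq: "Dfun u = 0" if cu: "close av r0 u0 u" for u
      proof -
        have len: "length u = length u0" using close_len[OF cu] .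
        have "\<forall>k<length u. av (u!k) = r0"
        proof (intro allI impI)
          fix k assume "k < length u"
          then have k: "k < length u0" using len by simp
          have "av (u!k - u0!k) < av (u0!k)" using close_at[OF cu k] alleq k unfolding r0_def by simp
          then show "av (u!k) = r0" using av_near alleq k unfolding r0_def by metis
        qed
        then have "\<not> diffabs av (mset u)" unfolding diffabs_def by (auto simp: in_set_conv_nth)
        then show ?thesis unfolding Dfun_def using len Suc.prems by simp
      qed
      show ?thesis by (rule contat_cong[OF r0 eq contat_const])
    next
      case True
      have z: "\<forall>k<length u0. u0!k = 0" using alleq True by simp
      show ?thesis
      proof (rule contatI)
        fix W assume W: "openin TE W" "Dfun u0 \<in> W"
        have W0: "0 \<in> W" using W(2) D0 by simp
        have "\<exists>V. openin TE V \<and> 0 \<in> V \<and> (\<forall>L. length L \<le> 2 ^ Suc n \<longrightarrow> set L \<subseteq> V \<longrightarrow> sum_list L \<in> W)"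
          by (rule sum_small[OF W(1) W0])
        then obtain V where V: "openin TE V" "0 \<in> V" "\<forall>L. length L \<le> 2 ^ Suc n \<longrightarrow> set L \<subseteq> V \<longrightarrow> sum_list L \<in> W"
          by (elim exE conjE) (rule that)
        have "\<exists>\<epsilon>>0. \<forall>w c. av w < \<epsilon> \<longrightarrow> av c * av w ^ Suc n \<le> 1 \<longrightarrow> sc c (h w) \<in> V"
          by (rule decay[OF V(1) V(2)])
        then obtain e where e: "e > 0" "\<forall>w c. av w < e \<longrightarrow> av c * av w ^ Suc n \<le> 1 \<longrightarrow> sc c (h w) \<in> V"
          by (elim exE conjE) (rule that)
        show "\<exists>r>0. \<forall>u. close av r u0 u \<longrightarrow> Dfun u \<in> W"
        proof (intro exI[of _ e] conjI allI impI)
          show "e > 0" by fact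
          fix u assume cu: "close av e u0 u"
          have len: "length u = length u0" using close_len[OF cu] .
          have small: "av w < e" if "w \<in># mset u" for w
          proof -
            have "w \<in> set u" using that by simp
            then obtain k where k: "k < length u" "w = u!k" by (metis in_set_conv_nth)
            have "av (u!k - u0!k) < e" using close_at[OF cu] k len by simp
            then show ?thesis using z k len by simp
          qed
          have "size (mset u) = Suc n + 1" using len Suc.prems by simp
          then have "\<exists>L. length L \<le> 2 ^ Suc n \<and> (\<forall>p\<in>set L. snd p \<in># mset u \<and> av (fst p) * av (snd p) ^ Suc n \<le> 1)
              \<and> D (Suc n) (mset u) = sum_list (map (\<lambda>p. sc (fst p) (h (snd p))) L)"
            by (rule dd_rep)
          then obtain L where L: "length L \<le> 2 ^ Suc n"
            "\<forall>p\<in>set L. snd p \<in># mset u \<and> av (fst p) * av (snd p) ^ Suc n \<le> 1"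
            "D (Suc n) (mset u) = sum_list (map (\<lambda>p. sc (fst p) (h (snd p))) L)"
            by (elim exE conjE) (rule that)
          have "set (map (\<lambda>p. sc (fst p) (h (snd p))) L) \<subseteq> V"
          proof
            fix y assume "y \<in> set (map (\<lambda>p. sc (fst p) (h (snd p))) L)"
            then obtain p where p: "p \<in> set L" "y = sc (fst p) (h (snd p))" by auto
            have pp: "snd p \<in># mset u" "av (fst p) * av (snd p) ^ Suc n \<le> 1"
              using L(2) p(1) by auto
            have "av (snd p) < e" using small[OF pp(1)] .
            then show "y \<in> V" using e(2)[rule_format, of "snd p" "fst p"] pp(2) p(2) by simp
          qed
          then have "sum_list (map (\<lambda>p. sc (fst p) (h (snd p))) L) \<in> W" using V(3) L(1) by simp
          then show "Dfun u \<in> W" unfolding Dfun_def using L(3) len Suc.prems by simp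
        qed
      qed
    qed
  qed
qed

lemma contat_Dfun_all: "contat Dfun u0"
proof (cases u0)
  case Nil then show ?thesis using contat_Dfun_nil by simp
next
  case (Cons a u')
  then show ?thesis using contat_Dfun[of u0 "length u'"] by simp
qed

end

inductive polyf :: "nat \<Rightarrow> ('k::field list \<Rightarrow> 'k) \<Rightarrow> bool" for N where
  pconst: "polyf N (\<lambda>w. a)"
| pproj: "i < N \<Longrightarrow> polyf N (\<lambda>w. w ! i)"
| padd: "polyf N p \<Longrightarrow> polyf N q \<Longrightarrow> polyf N (\<lambda>w. p w + q w)"
| pmult: "polyf N p \<Longrightarrow> polyf N q \<Longrightarrow> polyf N (\<lambda>w. p w * q w)"

lemma polyf_subst:
  assumes "polyf N p" "\<And>i. i < N \<Longrightarrow> polyf M (\<lambda>w. g w ! i)"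
  shows "polyf M (\<lambda>w. p (g w))"
  using assms(1)
proof (induction rule: polyf.induct)
  case (pconst a) then show ?case by (rule polyf.pconst)
next
  case (pproj i) then show ?case using assms(2) by simp
next
  case (padd p q) then show ?case by (auto intro: polyf.padd)
next
  case (pmult p q) then show ?case by (auto intro: polyf.pmult)
qed

definition Bm :: "nat \<Rightarrow> 'k list \<Rightarrow> 'k list" where "Bm N w = take N w"
definition Sm :: "nat \<Rightarrow> 'k::field list \<Rightarrow> 'k list" where
  "Sm N w = map (\<lambda>i. w!i + w!(2*N) * w!(N+i)) [0..<N]"

lemma Bm_nth: "i < N \<Longrightarrow> Bm N w ! i = w ! i" unfolding Bm_def by simp
lemma Sm_nth: "i < N \<Longrightarrow> Sm N w ! i = w!i + w!(2*N) * w!(N+i)" unfolding Sm_def by simp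

lemma polyf_B: "polyf N p \<Longrightarrow> polyf (2*N+1) (\<lambda>w. p (Bm N w))"
proof (rule polyf_subst)
  fix i assume i: "i < N"
  have "polyf (2*N+1) (\<lambda>w. w!i)" using i by (intro polyf.pproj) auto
  then show "polyf (2*N+1) (\<lambda>w. Bm N w ! i)" using i by (simp add: Bm_nth)
qed

lemma polyf_S: "polyf N p \<Longrightarrow> polyf (2*N+1) (\<lambda>w. p (Sm N w))"
proof (rule polyf_subst)
  fix i assume i: "i < N"
  have "polyf (2*N+1) (\<lambda>w. w!i + w!(2*N) * w!(N+i))"
    using i by (intro polyf.padd polyf.pmult polyf.pproj) auto
  then show "polyf (2*N+1) (\<lambda>w. Sm N w ! i)" using i by (simp add: Sm_nth)
qed

lemma polyf_shift:
  "polyf N p \<Longrightarrow> \<exists>p'. polyf (2*N+1) p' \<and> (\<forall>w. p (Sm N w) - p (Bm N w) = w!(2*N) * p' w)"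
proof (induction rule: polyf.induct)
  case (pconst a)
  show ?case by (intro exI[of _ "\<lambda>w. 0"] conjI polyf.pconst) simp
next
  case (pproj i)
  show ?case
    by (intro exI[of _ "\<lambda>w. w!(N+i)"] conjI polyf.pproj) (use pproj in \<open>auto simp: Sm_nth Bm_nth\<close>)
next
  case (padd p q)
  then obtain p' q' where "polyf (2*N+1) p'" "\<forall>w. p (Sm N w) - p (Bm N w) = w!(2*N) * p' w"
     "polyf (2*N+1) q'" "\<forall>w. q (Sm N w) - q (Bm N w) = w!(2*N) * q' w" by auto
  then show ?case
    by (intro exI[of _ "\<lambda>w. p' w + q' w"] conjI polyf.padd) (auto simp: algebra_simps)
next
  case (pmult p q)
  then obtain p' q' where a: "polyf (2*N+1) p'" "\<forall>w. p (Sm N w) - p (Bm N w) = w!(2*N) * p' w"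
     "polyf (2*N+1) q'" "\<forall>w. q (Sm N w) - q (Bm N w) = w!(2*N) * q' w" by auto
  have pf: "polyf (2*N+1) (\<lambda>w. p' w * q (Sm N w) + p (Bm N w) * q' w)"
    using a(1,3) polyf_S[OF pmult.hyps(2)] polyf_B[OF pmult.hyps(1)]
    by (intro polyf.padd polyf.pmult)
  have "p (Sm N w) * q (Sm N w) - p (Bm N w) * q (Bm N w)
      = w!(2*N) * (p' w * q (Sm N w) + p (Bm N w) * q' w)" for w
  proof -
    have "p (Sm N w) * q (Sm N w) - p (Bm N w) * q (Bm N w)
        = (p (Sm N w) - p (Bm N w)) * q (Sm N w) + p (Bm N w) * (q (Sm N w) - q (Bm N w))"
      by (simp add: algebra_simps)
    also have "\<dots> = (w!(2*N) * p' w) * q (Sm N w) + p (Bm N w) * (w!(2*N) * q' w)"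
      using a(2,4) by simp
    finally show ?thesis by (simp add: algebra_simps)
  qed
  then show ?case using pf by blast
qed

context tvs
begin

lemma polyf_kcontat: "polyf N p \<Longrightarrow> length u0 = N \<Longrightarrow> kcontat p u0"
proof (induction rule: polyf.induct)
  case (pconst a) show ?case by (rule kcontat_const)
next
  case (pproj i) then show ?case by (intro kcontat_nth) simp
next
  case (padd p q) then show ?case by (intro kcontat_add) auto
next
  case (pmult p q) then show ?case by (intro kcontat_mult) auto
qed

end

context ddloc2
begin

inductive good :: "nat \<Rightarrow> ('k list \<Rightarrow> 'e) \<Rightarrow> bool" for N where
  gconst: "good N (\<lambda>w. e)"
| gterm: "polyf N p \<Longrightarrow> (\<forall>q\<in>set qs. polyf N q) \<Longrightarrow> good N (\<lambda>w. sc (p w) (Dfun (map (\<lambda>q. q w) qs)))"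
| gadd: "good N F \<Longrightarrow> good N G \<Longrightarrow> good N (\<lambda>w. F w + G w)"

lemma good_contat: "good N F \<Longrightarrow> length u0 = N \<Longrightarrow> contat F u0"
proof (induction rule: good.induct)
  case (gconst e) show ?case by (rule contat_const)
next
  case (gterm p qs)
  have kp: "kcontat p u0" using polyf_kcontat[OF gterm(1) gterm(3)] .
  have kq: "\<forall>q\<in>set qs. kcontat q u0" using polyf_kcontat gterm(2,3) by blast
  have cD: "contat (\<lambda>w. Dfun (map (\<lambda>q. q w) qs)) u0"
  proof (rule contat_comp[where g=Dfun and d="\<lambda>w. map (\<lambda>q. q w) qs"])
    show "contat Dfun (map (\<lambda>q. q u0) qs)" by (rule contat_Dfun_all)
    fix e :: real assume "e > 0"
    then show "\<exists>r>0. \<forall>u. close av r u0 u \<longrightarrow> close av e (map (\<lambda>q. q u0) qs) (map (\<lambda>q. q u) qs)"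
      by (rule close_map[OF kq])
  qed
  show ?case by (rule contat_sc[OF kp cD])
next
  case (gadd F G) then show ?case by (intro contat_add) auto
qed

lemma dterm_shift:
  assumes "polyf (2*N+1) \<kappa>" "\<forall>q\<in>set P. polyf (2*N+1) q" "\<forall>q\<in>set qs. polyf N q"
  shows "\<exists>G. good (2*N+1) G \<and> (\<forall>w. sc (\<kappa> w) (Dfun (map (\<lambda>q. q w) P @ map (\<lambda>q. q (Sm N w)) qs)
            - Dfun (map (\<lambda>q. q w) P @ map (\<lambda>q. q (Bm N w)) qs)) = sc (w!(2*N)) (G w))"
  using assms(2,3)
proof (induction qs arbitrary: P)
  case Nil
  show ?case by (intro exI[of _ "\<lambda>w. 0"] conjI gconst) simp
next
  case (Cons q qs P)
  have q: "polyf N q" using Cons.prems by simp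
  have qs: "\<forall>q\<in>set qs. polyf N q" using Cons.prems by simp
  define qS where "qS w = q (Sm N w)" for w
  define qB where "qB w = q (Bm N w)" for w
  have pqS: "polyf (2*N+1) qS" unfolding qS_def by (rule polyf_S[OF q])
  have pqB: "polyf (2*N+1) qB" unfolding qB_def by (rule polyf_B[OF q])
  obtain q' where q': "polyf (2*N+1) q'" "\<forall>w. q (Sm N w) - q (Bm N w) = w!(2*N) * q' w"
    using polyf_shift[OF q] by blast
  have P': "\<forall>q\<in>set (P @ [qS]). polyf (2*N+1) q" using Cons.prems pqS by auto
  obtain G1 where G1: "good (2*N+1) G1"
    "\<forall>w. sc (\<kappa> w) (Dfun (map (\<lambda>q. q w) (P @ [qS]) @ map (\<lambda>q. q (Sm N w)) qs)
            - Dfun (map (\<lambda>q. q w) (P @ [qS]) @ map (\<lambda>q. q (Bm N w)) qs)) = sc (w!(2*N)) (G1 w)"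
    using Cons.IH[OF P' qs] by blast
  define R where "R = P @ [qB, qS] @ map (\<lambda>q w. q (Bm N w)) qs"
  have pR: "\<forall>r\<in>set R. polyf (2*N+1) r"
    unfolding R_def using Cons.prems pqS pqB polyf_B qs by auto
  define G2 where "G2 w = sc (\<kappa> w * q' w) (Dfun (map (\<lambda>r. r w) R))" for w
  have gG2: "good (2*N+1) G2" unfolding G2_def
    by (rule gterm[OF polyf.pmult[OF assms(1) q'(1)] pR])
  show ?case
  proof (intro exI[of _ "\<lambda>w. G1 w + G2 w"] conjI allI)
    show "good (2*N+1) (\<lambda>w. G1 w + G2 w)" by (rule gadd[OF G1(1) gG2])
    fix w
    define Pw where "Pw = map (\<lambda>q. q w) P"
    define A where "A = map (\<lambda>q. q (Sm N w)) qs"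
    define B where "B = map (\<lambda>q. q (Bm N w)) qs"
    have e1: "sc (\<kappa> w) (Dfun (Pw @ [qS w] @ A) - Dfun (Pw @ [qS w] @ B)) = sc (w!(2*N)) (G1 w)"
      using G1(2) unfolding Pw_def A_def B_def by simp
    have sw: "Dfun (Pw @ [qS w] @ B) - Dfun (Pw @ [qB w] @ B) = sc (qS w - qB w) (Dfun (Pw @ [qB w, qS w] @ B))"
      by (rule Dfun_swap)
    have mR: "map (\<lambda>r. r w) R = Pw @ [qB w, qS w] @ B"
      unfolding R_def Pw_def B_def by simp
    have e2: "sc (\<kappa> w) (Dfun (Pw @ [qS w] @ B) - Dfun (Pw @ [qB w] @ B)) = sc (w!(2*N)) (G2 w)"
    proof -
      have "qS w - qB w = w!(2*N) * q' w" using q'(2) unfolding qS_def qB_def by simp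
      then have "sc (\<kappa> w) (Dfun (Pw @ [qS w] @ B) - Dfun (Pw @ [qB w] @ B))
          = sc (\<kappa> w) (sc (w!(2*N) * q' w) (Dfun (Pw @ [qB w, qS w] @ B)))" using sw by simp
      also have "\<dots> = sc (w!(2*N)) (G2 w)" unfolding G2_def mR by (simp add: ac_simps)
      finally show ?thesis .
    qed
    have "Dfun (map (\<lambda>q. q w) P @ map (\<lambda>q. q (Sm N w)) (q # qs))
        - Dfun (map (\<lambda>q. q w) P @ map (\<lambda>q. q (Bm N w)) (q # qs))
        = (Dfun (Pw @ [qS w] @ A) - Dfun (Pw @ [qS w] @ B)) + (Dfun (Pw @ [qS w] @ B) - Dfun (Pw @ [qB w] @ B))"
      unfolding Pw_def A_def B_def qS_def qB_def by simp
    then show "sc (\<kappa> w) (Dfun (map (\<lambda>q. q w) P @ map (\<lambda>q. q (Sm N w)) (q # qs))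
        - Dfun (map (\<lambda>q. q w) P @ map (\<lambda>q. q (Bm N w)) (q # qs))) = sc (w!(2*N)) (G1 w + G2 w)"
      using e1 e2 by (simp only: scale_right_distrib)
  qed
qed

lemma good_shift:
  "good N F \<Longrightarrow> \<exists>F'. good (2*N+1) F' \<and> (\<forall>w. F (Sm N w) - F (Bm N w) = sc (w!(2*N)) (F' w))"
proof (induction rule: good.induct)
  case (gconst e)
  show ?case by (intro exI[of _ "\<lambda>w. 0"] conjI good.gconst) simp
next
  case (gterm p qs)
  obtain p' where p': "polyf (2*N+1) p'" "\<forall>w. p (Sm N w) - p (Bm N w) = w!(2*N) * p' w"
    using polyf_shift[OF gterm(1)] by blast
  define QS where "QS = map (\<lambda>q w. q (Sm N w)) qs"
  have pQS: "\<forall>r\<in>set QS. polyf (2*N+1) r" unfolding QS_def using gterm(2) polyf_S by auto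
  define T1 where "T1 w = sc (p' w) (Dfun (map (\<lambda>r. r w) QS))" for w
  have gT1: "good (2*N+1) T1" unfolding T1_def by (rule good.gterm[OF p'(1) pQS])
  obtain G where G: "good (2*N+1) G"
    "\<forall>w. sc (p (Bm N w)) (Dfun (map (\<lambda>q. q w) [] @ map (\<lambda>q. q (Sm N w)) qs)
            - Dfun (map (\<lambda>q. q w) [] @ map (\<lambda>q. q (Bm N w)) qs)) = sc (w!(2*N)) (G w)"
    using dterm_shift[OF polyf_B[OF gterm(1)] _ gterm(2), of "[]"] by auto
  show ?case
  proof (intro exI[of _ "\<lambda>w. T1 w + G w"] conjI allI)
    show "good (2*N+1) (\<lambda>w. T1 w + G w)" by (rule gadd[OF gT1 G(1)])
    fix w
    define XS where "XS = Dfun (map (\<lambda>q. q (Sm N w)) qs)"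
    define XB where "XB = Dfun (map (\<lambda>q. q (Bm N w)) qs)"
    have mQ: "map (\<lambda>r. r w) QS = map (\<lambda>q. q (Sm N w)) qs" unfolding QS_def by simp
    have "sc (p (Sm N w)) XS - sc (p (Bm N w)) XB
        = sc (p (Sm N w) - p (Bm N w)) XS + sc (p (Bm N w)) (XS - XB)"
      by (simp add: scale_left_diff_distrib scale_right_diff_distrib)
    also have "sc (p (Sm N w) - p (Bm N w)) XS = sc (w!(2*N)) (T1 w)"
      unfolding T1_def mQ XS_def using p'(2) by simp
    also have "sc (p (Bm N w)) (XS - XB) = sc (w!(2*N)) (G w)"
      using G(2) unfolding XS_def XB_def by simp
    finally show "sc (p (Sm N w)) (Dfun (map (\<lambda>q. q (Sm N w)) qs)) - sc (p (Bm N w)) (Dfun (map (\<lambda>q. q (Bm N w)) qs))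
        = sc (w!(2*N)) (T1 w + G w)"
      unfolding XS_def XB_def by (simp add: scale_right_distrib)
  qed
next
  case (gadd F G)
  then obtain F' G' where "good (2*N+1) F'" "\<forall>w. F (Sm N w) - F (Bm N w) = sc (w!(2*N)) (F' w)"
    "good (2*N+1) G'" "\<forall>w. G (Sm N w) - G (Bm N w) = sc (w!(2*N)) (G' w)" by auto
  then show ?case
    by (intro exI[of _ "\<lambda>w. F' w + G' w"] conjI good.gadd) (auto simp: scale_right_distrib algebra_simps)
qed

end

primrec Lk :: "nat \<Rightarrow> nat" where
  "Lk 0 = 1"
| "Lk (Suc k) = 2 * Lk k + 1"

lemma dom1_len: "dom1 {w :: 'k::field list. length w = N} = {w. length w = 2*N+1}"
proof (intro set_eqI iffI)
  fix w :: "'k list" assume "w \<in> dom1 {w. length w = N}"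
  then obtain xs vs t where "w = xs @ vs @ [t]" "length xs = N" "length vs = length xs"
    unfolding dom1_def by blast
  then show "w \<in> {w. length w = 2*N+1}" by simp
next
  fix w :: "'k list" assume "w \<in> {w. length w = 2*N+1}"
  then have l: "length w = 2*N+1" by simp
  define xs where "xs = take N w"
  define vs where "vs = take N (drop N w)"
  define t where "t = last w"
  have w: "w = xs @ vs @ [t]"
  proof -
    have "w \<noteq> []" using l by auto
    then have "w = butlast w @ [t]" unfolding t_def by simp
    moreover have "butlast w = take (N + N) w" using l by (simp add: butlast_conv_take mult_2)
    moreover have "take (N + N) w = xs @ vs" unfolding xs_def vs_def by (rule take_add)
    ultimately show ?thesis by simp
  qed
  have "length xs = N" "length vs = N" using l by (simp_all add: xs_def vs_def)
  moreover have "length (map2 (\<lambda>x v. x + t * v) xs vs) = N" using \<open>length xs = N\<close> \<open>length vs = N\<close> by simp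
  ultimately show "w \<in> dom1 {w. length w = N}" unfolding dom1_def
    by (intro CollectI exI[of _ xs] exI[of _ vs] exI[of _ t]) (simp add: w)
qed

lemma cdom_len: "cdom k = {w :: 'k::field list. length w = Lk k}"
  by (induction k) (simp_all add: dom1_len)

context ddloc2
begin

primrec Gs :: "'e \<Rightarrow> nat \<Rightarrow> 'k list \<Rightarrow> 'e" where
  "Gs x 0 = (\<lambda>w. x + Dfun [w!0])"
| "Gs x (Suc k) = (SOME F'. good (2 * Lk k + 1) F' \<and>
      (\<forall>w. Gs x k (Sm (Lk k) w) - Gs x k (Bm (Lk k) w) = sc (w!(2 * Lk k)) (F' w)))"

lemma Gs_good: "good (Lk k) (Gs x k) \<and>
  (\<forall>w. Gs x k (Sm (Lk k) w) - Gs x k (Bm (Lk k) w) = sc (w!(2 * Lk k)) (Gs x (Suc k) w))"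
proof (induction k)
  case 0
  have g0: "good (Lk 0) (Gs x 0)"
  proof -
    have p0: "polyf 1 (\<lambda>w. w!0)" by (rule polyf.pproj) simp
    have "good 1 (\<lambda>w. sc 1 (Dfun (map (\<lambda>q. q w) [\<lambda>w. w!0])))"
      by (rule good.gterm[OF polyf.pconst]) (use p0 in simp)
    then have "good 1 (\<lambda>w. x + sc 1 (Dfun (map (\<lambda>q. q w) [\<lambda>w. w!0])))"
      by (rule good.gadd[OF good.gconst])
    then show ?thesis by simp
  qed
  have "\<exists>F'. good (2 * Lk 0 + 1) F' \<and> (\<forall>w. Gs x 0 (Sm (Lk 0) w) - Gs x 0 (Bm (Lk 0) w) = sc (w!(2 * Lk 0)) (F' w))"
    by (rule good_shift[OF g0])
  then have "good (2 * Lk 0 + 1) (Gs x (Suc 0)) \<and> (\<forall>w. Gs x 0 (Sm (Lk 0) w) - Gs x 0 (Bm (Lk 0) w) = sc (w!(2 * Lk 0)) (Gs x (Suc 0) w))"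
    unfolding Gs.simps(2) by (rule someI_ex)
  then have h2: "\<forall>w. Gs x 0 (Sm (Lk 0) w) - Gs x 0 (Bm (Lk 0) w) = sc (w!(2 * Lk 0)) (Gs x (Suc 0) w)"
    by (rule conjunct2)
  show ?case using g0 h2 by (rule conjI)
next
  case (Suc k)
  have g: "good (Lk (Suc k)) (Gs x (Suc k))"
  proof -
    have "\<exists>F'. good (2 * Lk k + 1) F' \<and> (\<forall>w. Gs x k (Sm (Lk k) w) - Gs x k (Bm (Lk k) w) = sc (w!(2 * Lk k)) (F' w))"
      by (rule good_shift) (rule conjunct1[OF Suc.IH])
    then have "good (2 * Lk k + 1) (Gs x (Suc k))"
      unfolding Gs.simps(2) by (rule someI2_ex) (erule conjunct1)
    then show ?thesis by (simp only: Lk.simps)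
  qed
  have "\<exists>F'. good (2 * Lk (Suc k) + 1) F' \<and> (\<forall>w. Gs x (Suc k) (Sm (Lk (Suc k)) w) - Gs x (Suc k) (Bm (Lk (Suc k)) w) = sc (w!(2 * Lk (Suc k))) (F' w))"
    by (rule good_shift[OF g])
  then have "\<forall>w. Gs x (Suc k) (Sm (Lk (Suc k)) w) - Gs x (Suc k) (Bm (Lk (Suc k)) w) = sc (w!(2 * Lk (Suc k))) (Gs x (Suc (Suc k)) w)"
    unfolding Gs.simps(2)[of x "Suc k"] by (rule someI2_ex) (erule conjunct2)
  then show ?case by (rule conjI[OF g])
qed

lemma smooth: "smooth_curve av sc TE (\<lambda>t. x + h t)"
  unfolding smooth_curve_def
proof (intro exI[of _ "Gs x"] conjI allI impI)
  fix t show "Gs x 0 [t] = x + h t" by simp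
next
  fix k
  show "cont_on av TE (cdom k) (Gs x k)"
    unfolding cont_on_def
  proof (intro ballI allI impI)
    fix w W assume w: "w \<in> cdom k" and W: "openin TE W \<and> Gs x k w \<in> W"
    have lw: "length w = Lk k" using w by (simp add: cdom_len)
    have W1: "openin TE W" and W2: "Gs x k w \<in> W" using W by auto
    have cg: "contat (Gs x k) w" using good_contat[OF conjunct1[OF Gs_good] lw] .
    have "\<exists>r>0. \<forall>u. close av r w u \<longrightarrow> Gs x k u \<in> W"
      using cg W1 W2 unfolding contat_def by blast
    then obtain r where r0: "r > 0" "\<forall>u. close av r w u \<longrightarrow> Gs x k u \<in> W"
      by (elim exE conjE) (rule that)
    have r: "r > 0" "\<And>u. close av r w u \<Longrightarrow> Gs x k u \<in> W" using r0 by auto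
    show "\<exists>r>0. \<forall>y\<in>cdom k. ldist av w y < r \<longrightarrow> Gs x k y \<in> W"
    proof (intro exI[of _ r] conjI ballI impI)
      show "r > 0" by fact
      fix y assume y: "y \<in> cdom k" "ldist av w y < r"
      have "length w = length y" using y(1) lw by (simp add: cdom_len)
      then show "Gs x k y \<in> W" by (rule r(2)[OF ldist_close[OF _ y(2)]])
    qed
  qed
next
  fix k and xs vs :: "'k list" and t :: 'k
  assume a: "xs @ vs @ [t] \<in> cdom (Suc k) \<and> length vs = length xs"
  define w where "w = xs @ vs @ [t]"
  have "length w = 2 * Lk k + 1" using a unfolding w_def by (simp add: cdom_len)
  then have lx: "length xs = Lk k" "length vs = Lk k" using a unfolding w_def by auto
  have B: "Bm (Lk k) w = xs" unfolding Bm_def w_def using lx by simp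
  have t: "w!(2 * Lk k) = t" unfolding w_def using lx by (simp add: nth_append)
  have S: "Sm (Lk k) w = map2 (\<lambda>x v. x + t * v) xs vs"
  proof (rule nth_equalityI)
    show "length (Sm (Lk k) w) = length (map2 (\<lambda>x v. x + t * v) xs vs)" using lx by (simp add: Sm_def)
    fix i assume "i < length (Sm (Lk k) w)"
    then have i: "i < Lk k" by (simp add: Sm_def)
    have "Sm (Lk k) w ! i = w!i + w!(2 * Lk k) * w!(Lk k + i)" using i by (rule Sm_nth)
    also have "\<dots> = xs!i + t * vs!i" using i lx t unfolding w_def by (simp add: nth_append)
    finally show "Sm (Lk k) w ! i = map2 (\<lambda>x v. x + t * v) xs vs ! i" using i lx by simp
  qed
  have e: "Gs x k (Sm (Lk k) w) - Gs x k (Bm (Lk k) w) = sc (w!(2 * Lk k)) (Gs x (Suc k) w)"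
    using conjunct2[OF Gs_good[of k x]] by (rule spec)
  have e2: "Gs x k (map2 (\<lambda>x v. x + t * v) xs vs) - Gs x k xs = sc t (Gs x (Suc k) w)"
    using e by (simp only: S B t)
  then show "Gs x k (map2 (\<lambda>x v. x + t * v) xs vs) - Gs x k xs = sc t (Gs x (Suc k) (xs @ vs @ [t]))"
    unfolding w_def .
qed

end

context tvs
begin

lemma cont_scal: "continuous_map TE TE (\<lambda>z. sc l z)"
proof -
  have "continuous_map TE (prod_topology (abs_topology av) TE) (\<lambda>z. (l, z))"
    by (intro continuous_map_pairedI) (auto simp: continuous_map_id[unfolded id_def])
  then have "continuous_map TE TE ((\<lambda>(t,v). sc t v) \<circ> (\<lambda>z. (l, z)))"
    using scc by (rule continuous_map_compose)
  then show ?thesis by (simp add: comp_def)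
qed

lemma cont_transl: "continuous_map TE TE (\<lambda>z. z + a)"
proof -
  have "continuous_map TE (prod_topology TE TE) (\<lambda>z. (z, a))"
    using topE by (intro continuous_map_pairedI) (auto simp: continuous_map_id[unfolded id_def])
  then have "continuous_map TE TE ((\<lambda>(x,y). x + y) \<circ> (\<lambda>z. (z, a)))"
    using addc by (rule continuous_map_compose)
  then show ?thesis by (simp add: comp_def)
qed

lemma bounded_nbhd:
  assumes rho: "0 < av \<rho>" "av \<rho> < 1" and W: "openin TE W" "0 \<in> W"
  shows "\<exists>V. openin TE V \<and> 0 \<in> V \<and> (\<forall>z\<in>V. \<forall>c. av c \<le> R \<longrightarrow> sc c z \<in> W)"
proof -
  have "(\<lambda>(t,v). sc t v) (0, 0) \<in> W" using W(2) by simp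
  then obtain A B where AB: "openin (abs_topology av) A" "openin TE B" "0 \<in> A" "0 \<in> B"
     "\<forall>x\<in>A. \<forall>y\<in>B. (\<lambda>(t,v). sc t v) (x,y) \<in> W"
    using prod_nbhd[OF scc W(1), of 0 0] topE by auto
  obtain d where d: "d > 0" "\<And>y. av (y - 0) < d \<Longrightarrow> y \<in> A"
    using AB(1,3) unfolding openin_abs_topology by blast
  have "d / (\<bar>R\<bar> + 1) > 0" using d by simp
  then obtain n where n: "av \<rho> ^ n < d / (\<bar>R\<bar> + 1)" using real_arch_pow_inv rho(2) by blast
  have rn: "av \<rho> ^ n * R < d"
  proof -
    have "av \<rho> ^ n * R \<le> av \<rho> ^ n * (\<bar>R\<bar> + 1)" using rho by (intro mult_left_mono) auto
    also have "\<dots> < d" using n by (simp add: field_simps)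
    finally show ?thesis .
  qed
  have rho0: "\<rho> \<noteq> 0" using rho by auto
  define l where "l = inverse (\<rho> ^ n)"
  define V where "V = {z \<in> topspace TE. sc l z \<in> B}"
  have oV: "openin TE V" unfolding V_def by (rule openin_continuous_map_preimage[OF cont_scal AB(2)])
  show ?thesis
  proof (intro exI[of _ V] conjI ballI allI impI)
    show "openin TE V" by fact
    show "0 \<in> V" unfolding V_def using AB(4) topE by simp
    fix z c assume z: "z \<in> V" and c: "av c \<le> R"
    have "av (c * \<rho> ^ n) = av c * av \<rho> ^ n" by (simp add: av_mult av_power)
    also have "\<dots> \<le> R * av \<rho> ^ n" using c rho by (intro mult_right_mono) auto
    also have "\<dots> < d" using rn by (simp add: mult.commute)
    finally have "c * \<rho> ^ n \<in> A" using d(2) by simp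
    moreover have "sc l z \<in> B" using z unfolding V_def by simp
    ultimately have "(\<lambda>(t,v). sc t v) (c * \<rho> ^ n, sc l z) \<in> W" using AB(5) by blast
    then have "sc (c * \<rho> ^ n * l) z \<in> W" by simp
    moreover have "c * \<rho> ^ n * l = c" unfolding l_def using rho0 by simp
    ultimately show "sc c z \<in> W" by simp
  qed
qed

end

primrec pick :: "(nat \<Rightarrow> nat \<Rightarrow> bool) \<Rightarrow> nat \<Rightarrow> nat" where
  "pick P 0 = 0"
| "pick P (Suc k) = (LEAST n. pick P k < n \<and> P (Suc k) n)"

lemma pick_step:
  assumes "\<And>k. \<exists>N. \<forall>n\<ge>N. P k n"
  shows "pick P k < pick P (Suc k) \<and> P (Suc k) (pick P (Suc k))"
proof -
  obtain N where N: "\<forall>n\<ge>N. P (Suc k) n" using assms by blast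
  have "\<exists>n. pick P k < n \<and> P (Suc k) n"
    using N by (intro exI[of _ "max N (Suc (pick P k))"]) auto
  then show ?thesis unfolding pick.simps by (rule LeastI_ex)
qed

definition sh :: "('k::field \<Rightarrow> real) \<Rightarrow> 'k \<Rightarrow> 'k \<Rightarrow> nat" where
  "sh av \<rho> t = (LEAST k. 1 \<le> k \<and> av \<rho> ^ (k+1) < av t)"

context uav
begin

lemma sh_props:
  assumes rho: "0 < av \<rho>" "av \<rho> < 1" and t: "t \<noteq> 0"
  shows "1 \<le> sh av \<rho> t \<and> av \<rho> ^ (sh av \<rho> t + 1) < av t"
proof -
  obtain n where n: "av \<rho> ^ n < av t" using real_arch_pow_inv[OF av_pos[OF t] rho(2)] by blast
  have "av \<rho> ^ (max 1 n + 1) \<le> av \<rho> ^ n" using rho by (intro power_decreasing) auto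
  then have "\<exists>k. 1 \<le> k \<and> av \<rho> ^ (k+1) < av t" using n by (intro exI[of _ "max 1 n"]) auto
  then show ?thesis unfolding sh_def by (rule LeastI_ex)
qed

lemma sh_rho:
  assumes rho: "0 < av \<rho>" "av \<rho> < 1" and k: "1 \<le> k"
  shows "sh av \<rho> (\<rho> ^ k) = k"
  unfolding sh_def
proof (rule Least_equality)
  show "1 \<le> k \<and> av \<rho> ^ (k + 1) < av (\<rho> ^ k)"
    using k rho by (simp add: av_power)
  fix y assume y: "1 \<le> y \<and> av \<rho> ^ (y + 1) < av (\<rho> ^ k)"
  then have "av \<rho> ^ (y + 1) < av \<rho> ^ k" by (simp add: av_power)
  then have "k < y + 1" using power_strict_decreasing_iff[OF rho(1) rho(2), of "y+1" k] by blast
  then show "k \<le> y" by simp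
qed

end

theorem lemma11p1:
  fixes av :: "'k::field \<Rightarrow> real" and \<rho> :: 'k
    and sc :: "'k \<Rightarrow> 'e::ab_group_add \<Rightarrow> 'e" and TE :: "'e topology"
    and U :: "'e set" and x :: 'e and xs ys :: "nat \<Rightarrow> 'e"
  assumes "ultrametric_abs av"
    and "0 < av \<rho>" and "av \<rho> < 1"
    and "metrizable_tvs av sc TE"
    and "openin TE U" and "x \<in> U"
    and "\<forall>n\<ge>1. xs n \<in> U" and "\<forall>n\<ge>1. ys n \<in> U"
    and "limitin TE xs x sequentially" and "limitin TE ys x sequentially"
  shows "\<exists>(m :: nat \<Rightarrow> nat) (c :: 'k \<Rightarrow> 'e).
           strict_mono_on {1..} m \<and> (\<forall>k\<ge>1. m k \<ge> 1) \<and>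
           smooth_curve av sc TE c \<and> (\<forall>t. c t \<in> U) \<and>
           (\<forall>k\<ge>1. odd k \<longrightarrow> c (\<rho> ^ k) = xs (m k)) \<and>
           (\<forall>k\<ge>1. even k \<longrightarrow> c (\<rho> ^ k) = ys (m k)) \<and>
           c 0 = x \<and>
           (\<forall>t. t \<noteq> 0 \<longrightarrow> (\<exists>r>0. \<forall>s. av (s - t) < r \<longrightarrow> c s = c t)) \<and>
           (\<forall>t s. av t = av s \<longrightarrow> c t = c s) \<and>
           c ` (UNIV - {0}) = {c (\<rho> ^ k) | k. k \<ge> 1}"
proof -
  note A = assms
  interpret uav av by unfold_locales (rule A(1))
  have mt: "vector_space sc" "topspace TE = UNIV"
    "continuous_map (prod_topology TE TE) TE (\<lambda>(x, y). x + y)"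
    "continuous_map (prod_topology (abs_topology av) TE) TE (\<lambda>(t, v). sc t v)"
    "metrizable_space TE"
    using A(4) unfolding metrizable_tvs_def by auto
  have tv: "tvs av sc TE" by (rule tvs.intro[OF uav_axioms tvs_axioms.intro[OF mt(1) mt(2) mt(3) mt(4)]])
  interpret tvs av sc TE by (rule tv)
  have rho: "0 < av \<rho>" "av \<rho> < 1" using A(2,3) by auto
  have rho0: "\<rho> \<noteq> 0" using rho by auto
  obtain M d where Md: "Metric_space M d" "TE = Metric_space.mtopology M d"
    using mt(5) unfolding metrizable_space_def by blast
  interpret Metric_space M d by (rule Md(1))
  have MU: "M = UNIV" using topE Md(2) by simp
  define Bk where "Bk k = mball 0 (inverse (real (Suc k)))" for k
  have Bk_open: "openin TE (Bk k)" for k unfolding Bk_def Md(2) by simp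
  have Bk0: "0 \<in> Bk k" for k unfolding Bk_def by (rule centre_in_mball_iff[THEN iffD2]) (simp add: MU)
  have Bk_small: "\<exists>K. \<forall>k\<ge>K. Bk k \<subseteq> W" if W: "openin TE W" "0 \<in> W" for W
  proof -
    have "openin mtopology W" using W(1) Md(2) by simp
    then obtain r where r: "r > 0" "mball 0 r \<subseteq> W" using W(2) unfolding openin_mtopology by blast
    obtain K where K: "inverse (real (Suc K)) < r" using reals_Archimedean r(1) by blast
    show ?thesis
    proof (intro exI[of _ K] allI impI)
      fix k assume "K \<le> k"
      then have "inverse (real (Suc k)) \<le> inverse (real (Suc K))" by (simp add: field_simps)
      then have "inverse (real (Suc k)) \<le> r" using K by linarith
      then have "Bk k \<subseteq> mball 0 r" unfolding Bk_def by (rule mball_subset_concentric)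
      then show "Bk k \<subseteq> W" using r(2) by simp
    qed
  qed
  define seq where "seq k = (if odd k then xs else ys)" for k :: nat
  define R where "R k = inverse (av \<rho>) ^ ((k+1)*k)" for k :: nat
  define P where "P k n \<longleftrightarrow> (\<forall>c. av c \<le> R k \<longrightarrow> sc c (seq k n - x) \<in> Bk k)" for k n
  have ev: "\<exists>N. \<forall>n\<ge>N. P k n" for k
  proof -
    obtain V where V: "openin TE V" "0 \<in> V" "\<forall>z\<in>V. \<forall>c. av c \<le> R k \<longrightarrow> sc c z \<in> Bk k"
      using bounded_nbhd[OF rho Bk_open Bk0] by blast
    define Ob where "Ob = {y \<in> topspace TE. y + (- x) \<in> V}"
    have oO: "openin TE Ob" unfolding Ob_def by (rule openin_continuous_map_preimage[OF cont_transl V(1)])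
    have xO: "x \<in> Ob" unfolding Ob_def using V(2) topE by simp
    have lim: "limitin TE (seq k) x sequentially" unfolding seq_def using A(9,10) by simp
    have "eventually (\<lambda>n. seq k n \<in> Ob) sequentially"
      using lim oO xO unfolding limitin_def by blast
    then obtain N where N: "\<forall>n\<ge>N. seq k n \<in> Ob" unfolding eventually_sequentially by blast
    show ?thesis
    proof (intro exI[of _ N] allI impI)
      fix n assume "N \<le> n"
      then have "seq k n - x \<in> V" using N unfolding Ob_def by simp
      then show "P k n" unfolding P_def using V(3) by blast
    qed
  qed
  define m where "m = pick P"
  have mstep: "m k < m (Suc k) \<and> P (Suc k) (m (Suc k))" for k
    unfolding m_def by (rule pick_step[OF ev])
  have smono: "strict_mono m" using mstep by (intro strict_monoI_Suc) blast
  have m1: "m k \<ge> 1" if k1: "k \<ge> 1" for k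
  proof -
    obtain k' where "k = Suc k'" using k1 by (cases k) auto
    then show ?thesis using mstep[of k'] by simp
  qed
  have Pm: "P k (m k)" if k1: "k \<ge> 1" for k
  proof -
    obtain k' where "k = Suc k'" using k1 by (cases k) auto
    then show ?thesis using mstep[of k'] by simp
  qed
  define S where "S t = sh av \<rho> t" for t
  define c where "c t = (if t = 0 then x else seq (S t) (m (S t)))" for t
  define h where "h t = c t - x" for t
  have hsph: "h a = h b" if "av a = av b" for a b
  proof -
    have "a = 0 \<longleftrightarrow> b = 0" using that by (metis av_zero)
    moreover have "S a = S b" unfolding S_def sh_def using that by simp
    ultimately show ?thesis unfolding h_def c_def by simp
  qed
  have h0: "h 0 = 0" unfolding h_def c_def by simp
  have decay: "\<exists>\<epsilon>>0. \<forall>w c'. av w < \<epsilon> \<longrightarrow> av c' * av w ^ j \<le> 1 \<longrightarrow> sc c' (h w) \<in> W"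
    if W: "openin TE W" "0 \<in> W" for j W
  proof -
    obtain K where K: "\<forall>k\<ge>K. Bk k \<subseteq> W" using Bk_small[OF W] by blast
    define K' where "K' = max K j"
    have ep: "av \<rho> ^ (K'+1) > 0" using rho by simp
    show ?thesis
    proof (intro exI[of _ "av \<rho> ^ (K'+1)"] conjI allI impI)
      show "av \<rho> ^ (K'+1) > 0" by fact
      fix w c' assume w: "av w < av \<rho> ^ (K'+1)" and c': "av c' * av w ^ j \<le> 1"
      show "sc c' (h w) \<in> W"
      proof (cases "w = 0")
        case True then show ?thesis using h0 W(2) by simp
      next
        case False
        define k where "k = S w"
        have sk: "1 \<le> k" "av \<rho> ^ (k + 1) < av w" using sh_props[OF rho False] unfolding k_def S_def by auto
        then have "av \<rho> ^ (k + 1) < av \<rho> ^ (K'+1)" using w by simp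
        then have kK: "K' < k" using power_strict_decreasing_iff[OF rho(1) rho(2), of "k+1" "K'+1"] by simp
        have hw: "h w = seq k (m k) - x" unfolding h_def c_def k_def using False by simp
        have awpos: "av w ^ j > 0" using av_pos[OF False] by simp
        have "av c' \<le> 1 / av w ^ j" using c' awpos by (simp add: field_simps)
        also have "\<dots> \<le> 1 / (av \<rho> ^ (k+1)) ^ j"
        proof -
          have le1: "(av \<rho> ^ (k+1)) ^ j \<le> av w ^ j" using sk(2) rho by (intro power_mono) auto
          have pos1: "0 < (av \<rho> ^ (k+1)) ^ j" using rho by simp
          show ?thesis by (rule divide_left_mono[OF le1]) (use awpos pos1 in auto)
        qed
        also have "\<dots> = 1 / av \<rho> ^ ((k+1) * j)" by (simp only: power_mult)
        also have "\<dots> = inverse (av \<rho>) ^ ((k+1) * j)"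
          by (simp only: power_inverse divide_inverse mult_1_left)
        also have "\<dots> \<le> inverse (av \<rho>) ^ ((k+1) * k)"
        proof (rule power_increasing)
          have "j < k" using kK unfolding K'_def by simp
          then show "(k+1) * j \<le> (k+1) * k" by (intro mult_le_mono2) simp
          show "1 \<le> inverse (av \<rho>)" by (rule one_le_inverse) (use rho in auto)
        qed
        finally have "av c' \<le> R k" unfolding R_def .
        then have inB: "sc c' (seq k (m k) - x) \<in> Bk k" using Pm[OF sk(1)] unfolding P_def by blast
        have "K \<le> k" using kK unfolding K'_def by simp
        then have "Bk k \<subseteq> W" using K by blast
        then show ?thesis using hw inB by auto
      qed
    qed
  qed
  have dl: "ddloc av sc TE h" by (rule ddloc.intro[OF tv ddloc_axioms.intro]) (rule hsph)
  have dl2: "ddloc2 av sc TE h"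
  proof (rule ddloc2.intro[OF dl ddloc2_axioms.intro])
    show "h 0 = 0" by (rule h0)
    fix j W assume "openin TE W" "0 \<in> W"
    then show "\<exists>\<epsilon>>0. \<forall>w c'. av w < \<epsilon> \<longrightarrow> av c' * av w ^ j \<le> 1 \<longrightarrow> sc c' (h w) \<in> W"
      by (rule decay)
  qed
  interpret ddloc2 av sc TE h by (rule dl2)
  have ceq: "(\<lambda>t. x + h t) = c" unfolding h_def by simp
  have smooth_c: "smooth_curve av sc TE c" using smooth[of x] unfolding ceq .
  have S_rho: "S (\<rho> ^ k) = k" if "1 \<le> k" for k unfolding S_def by (rule sh_rho[OF rho that])
  have c_rho: "c (\<rho> ^ k) = seq k (m k)" if "1 \<le> k" for k
    unfolding c_def using S_rho[OF that] rho0 by simp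
  have cd: "c t = c s" if "av t = av s" for t s
    using hsph[OF that] unfolding h_def by simp
  show ?thesis
  proof (intro exI[of _ m] exI[of _ c] conjI allI impI)
    show "strict_mono_on {1..} m" using smono by (simp add: strict_mono_on_def strict_mono_def)
    show "\<And>k. 1 \<le> k \<Longrightarrow> 1 \<le> m k" by (rule m1)
    show "smooth_curve av sc TE c" by (rule smooth_c)
    fix t
    show "c t \<in> U"
    proof (cases "t = 0")
      case True then show ?thesis unfolding c_def using A(6) by simp
    next
      case False
      have "1 \<le> S t" using sh_props[OF rho False] unfolding S_def by auto
      then have "1 \<le> m (S t)" by (rule m1)
      then show ?thesis unfolding c_def seq_def using False A(7,8) by auto
    qed
  next
    fix k :: nat assume "1 \<le> k" "odd k"
    then show "c (\<rho> ^ k) = xs (m k)" using c_rho unfolding seq_def by simp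
  next
    fix k :: nat assume "1 \<le> k" "even k"
    then show "c (\<rho> ^ k) = ys (m k)" using c_rho unfolding seq_def by simp
  next
    show "c 0 = x" unfolding c_def by simp
  next
    fix t :: 'k assume t: "t \<noteq> 0"
    show "\<exists>r>0. \<forall>s. av (s - t) < r \<longrightarrow> c s = c t"
    proof (intro exI[of _ "av t"] conjI allI impI)
      show "av t > 0" using av_pos[OF t] .
      fix s assume "av (s - t) < av t"
      then have "av s = av t" by (rule av_near)
      then show "c s = c t" by (rule cd)
    qed
  next
    fix t s :: 'k assume "av t = av s"
    then show "c t = c s" by (rule cd)
  next
    show "c ` (UNIV - {0}) = {c (\<rho> ^ k) | k. k \<ge> 1}"
    proof (intro set_eqI iffI)
      fix y assume "y \<in> c ` (UNIV - {0})"
      then obtain t where t: "t \<noteq> 0" "y = c t" by auto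
      have "1 \<le> S t" using sh_props[OF rho t(1)] unfolding S_def by auto
      moreover have "c t = c (\<rho> ^ S t)" using c_rho[OF \<open>1 \<le> S t\<close>] t(1) unfolding c_def by simp
      ultimately show "y \<in> {c (\<rho> ^ k) | k. k \<ge> 1}" using t(2) by blast
    next
      fix y assume "y \<in> {c (\<rho> ^ k) | k. k \<ge> 1}"
      then obtain k where "k \<ge> 1" "y = c (\<rho> ^ k)" by blast
      moreover have "\<rho> ^ k \<noteq> 0" using rho0 by simp
      ultimately show "y \<in> c ` (UNIV - {0})" by blast
    qed
  qed
qed


end
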